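(* Let $\mathcal{M}$ be a relative category. Assume that for every $n\ge1$, every $0\le k\le n$ and every relative structure $W$ on $[n]=\{0<\dots<n\}$ satisfying (a) $W$ contains at least one non-identity relation, (b) $(0\le1)\in W$ if $k=0$, (c) $(n-1\le n)\in W$ if $k=n$, every relative functor $c\mathrm{Sd}^2\Lambda^k[n]\to\mathcal{M}$ extends to a relative functor $\xi(\underline n)\to\mathcal{M}$. Then $N_\xi\mathcal{M}$ is Reedy fibrant.
   Context: A relative category is a category with a subcategory of weak equivalences containing all objects; relative functors preserve weak equivalences. A relative structure $W$ on $[n]$ is a set of relations $i\le j$ containing identities and closed under composition. Given $W$, $\xi(\underline n)$ is the relative poset whose objects are strictly increasing chains $A_0\subsetneq\dots\subsetneq A_m$ ($m\ge0$) of non-empty subsets of $[n]$, with $B_\bullet\le A_\bullet$ iff each $B_j$ occurs among the $A_i$, a weak equivalence iff $(\min B_0\le\min A_0)\in W$. $c\mathrm{Sd}^2\Lambda^k[n]$ is the full subposet of chains with $A_m\notin\{[n],[n]\setminus\{k\}\}$, with induced relative structure. For a general relative poset $P$, $\xi P$ is defined likewise using chains of non-empty finite totally ordered subsets of $P$. With $\underline p=(0<\dots<p)$, $\check{\underline p}$ minimally and $\hat{\underline q}$ maximally relative, $N_\xi\mathcal{M}$ is the bisimplicial set $(p,q)\mapsto\mathrm{RelCat}(\xi(\check{\underline p}\times\hat{\underline q}),\mathcal{M})$; viewed as the simplicial object $p\mapsto(N_\xi\mathcal{M})_{p\bullet}$ in simplicial sets, it is Reedy fibrant if all matching maps are Kan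 fibrations. *)

theory Defs
  imports Main
begin

text \<open>A category presented by objects, hom-sets, identities and an object-indexed
composition (ccomp a b c g f = g o f for f : a -> b, g : b -> c), together with
a subcategory of weak equivalences containing all objects.\<close>

record ('o, 'm) relcat =
  cobj  :: "'o set"
  chom  :: "'o \<Rightarrow> 'o \<Rightarrow> 'm set"
  cid   :: "'o \<Rightarrow> 'm"
  ccomp :: "'o \<Rightarrow> 'o \<Rightarrow> 'o \<Rightarrow> 'm \<Rightarrow> 'm \<Rightarrow> 'm"
  cweq  :: "'o \<Rightarrow> 'o \<Rightarrow> 'm set"

definition relcat :: "('o, 'm) relcat \<Rightarrow> bool" where
  "relcat M \<longleftrightarrow>
     (\<forall>a\<in>cobj M. cid M a \<in> chom M a a) \<and>
     (\<forall>a\<in>cobj M. \<forall>b\<in>cobj M. \<forall>c\<in>cobj M. \<forall>f\<in>chom M a b. \<forall>g\<in>chom M b c.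
        ccomp M a b c g f \<in> chom M a c) \<and>
     (\<forall>a\<in>cobj M. \<forall>b\<in>cobj M. \<forall>f\<in>chom M a b.
        ccomp M a a b f (cid M a) = f \<and> ccomp M a b b (cid M b) f = f) \<and>
     (\<forall>a\<in>cobj M. \<forall>b\<in>cobj M. \<forall>c\<in>cobj M. \<forall>d\<in>cobj M.
        \<forall>f\<in>chom M a b. \<forall>g\<in>chom M b c. \<forall>h\<in>chom M c d.
        ccomp M a c d h (ccomp M a b c g f) = ccomp M a b d (ccomp M b c d h g) f) \<and>
     (\<forall>a\<in>cobj M. \<forall>b\<in>cobj M. cweq M a b \<subseteq> chom M a b) \<and>
     (\<forall>a\<in>cobj M. cid M a \<in> cweq M a a) \<and>
     (\<forall>a\<in>cobj M. \<forall>b\<in>cobj M. \<forall>c\<in>cobj M. \<forall>f\<in>cweq M a b. \<forall>g\<in>cweq M b c.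
        ccomp M a b c g f \<in> cweq M a c)"

record 'p relposet =
  pcar :: "'p set"
  ple  :: "'p \<Rightarrow> 'p \<Rightarrow> bool"
  pweq :: "'p \<Rightarrow> 'p \<Rightarrow> bool"

text \<open>Functors are represented extensionally (undefined off the carrier / off the order),
so that equality of functors is equality of these pairs.\<close>

definition relfun :: "'p relposet \<Rightarrow> ('o, 'm) relcat \<Rightarrow>
    ('p \<Rightarrow> 'o) \<times> ('p \<Rightarrow> 'p \<Rightarrow> 'm) \<Rightarrow> bool" where
  "relfun P M F \<longleftrightarrow>
     (\<forall>x\<in>pcar P. fst F x \<in> cobj M) \<and>
     (\<forall>x\<in>pcar P. \<forall>y\<in>pcar P. ple P x y \<longrightarrow> snd F x y \<in> chom M (fst F x) (fst F y)) \<and>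
     (\<forall>x\<in>pcar P. snd F x x = cid M (fst F x)) \<and>
     (\<forall>x\<in>pcar P. \<forall>y\<in>pcar P. \<forall>z\<in>pcar P. ple P x y \<longrightarrow> ple P y z \<longrightarrow>
        snd F x z = ccomp M (fst F x) (fst F y) (fst F z) (snd F y z) (snd F x y)) \<and>
     (\<forall>x\<in>pcar P. \<forall>y\<in>pcar P. ple P x y \<longrightarrow> pweq P x y \<longrightarrow>
        snd F x y \<in> cweq M (fst F x) (fst F y)) \<and>
     (\<forall>x. x \<notin> pcar P \<longrightarrow> fst F x = undefined) \<and>
     (\<forall>x y. \<not> (x \<in> pcar P \<and> y \<in> pcar P \<and> ple P x y) \<longrightarrow> snd F x y = undefined)"

definition pmin :: "'p relposet \<Rightarrow> 'p set \<Rightarrow> 'p" where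
  "pmin P A = (THE a. a \<in> A \<and> (\<forall>b\<in>A. ple P a b))"

text \<open>Objects: strictly increasing chains A_0 < ... < A_m (m >= 0) of non-empty finite
totally ordered subsets of P, represented as lists.\<close>

definition xi_car :: "'p relposet \<Rightarrow> 'p set list set" where
  "xi_car P = {As. As \<noteq> [] \<and> sorted_wrt (\<subset>) As \<and>
     (\<forall>A\<in>set As. A \<noteq> {} \<and> finite A \<and> A \<subseteq> pcar P \<and>
        (\<forall>a\<in>A. \<forall>b\<in>A. ple P a b \<or> ple P b a))}"

definition xi :: "'p relposet \<Rightarrow> 'p set list relposet" where
  "xi P = \<lparr> pcar = xi_car P,
            ple = (\<lambda>Bs As. set Bs \<subseteq> set As),
            pweq = (\<lambda>Bs As. set Bs \<subseteq> set As \<and> pweq P (pmin P (hd Bs)) (pmin P (hd As))) \<rparr>"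

definition ximap :: "('a \<Rightarrow> 'b) \<Rightarrow> 'a set list \<Rightarrow> 'b set list" where
  "ximap g As = remdups (map (\<lambda>A. g ` A) As)"

definition pullback :: "'a relposet \<Rightarrow> ('a \<Rightarrow> 'b) \<Rightarrow>
    ('b set list \<Rightarrow> 'o) \<times> ('b set list \<Rightarrow> 'b set list \<Rightarrow> 'm) \<Rightarrow>
    ('a set list \<Rightarrow> 'o) \<times> ('a set list \<Rightarrow> 'a set list \<Rightarrow> 'm)" where
  "pullback P g F =
     ((\<lambda>As. if As \<in> pcar (xi P) then fst F (ximap g As) else undefined),
      (\<lambda>As Bs. if As \<in> pcar (xi P) \<and> Bs \<in> pcar (xi P) \<and> ple (xi P) As Bs
               then snd F (ximap g As) (ximap g Bs) else undefined))"

definition relstruct :: "nat \<Rightarrow> (nat \<times> nat) set \<Rightarrow> bool" where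
  "relstruct n W \<longleftrightarrow> W \<subseteq> {(i, j). i \<le> j \<and> j \<le> n} \<and> (\<forall>i\<le>n. (i, i) \<in> W) \<and> trans W"

definition ordW :: "nat \<Rightarrow> (nat \<times> nat) set \<Rightarrow> nat relposet" where
  "ordW n W = \<lparr> pcar = {0..n}, ple = (\<le>), pweq = (\<lambda>i j. (i, j) \<in> W) \<rparr>"

definition cSd2horn :: "nat \<Rightarrow> nat \<Rightarrow> (nat \<times> nat) set \<Rightarrow> nat set list relposet" where
  "cSd2horn n k W =
     \<lparr> pcar = {As \<in> pcar (xi (ordW n W)). last As \<noteq> {0..n} \<and> last As \<noteq> {0..n} - {k}},
       ple = ple (xi (ordW n W)),
       pweq = pweq (xi (ordW n W)) \<rparr>"

definition horn_extension :: "('o, 'm) relcat \<Rightarrow> nat \<Rightarrow> nat \<Rightarrow> (nat \<times> nat) set \<Rightarrow> bool" where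
  "horn_extension M n k W \<longleftrightarrow>
     (\<forall>G. relfun (cSd2horn n k W) M G \<longrightarrow>
        (\<exists>F. relfun (xi (ordW n W)) M F \<and>
             (\<forall>x\<in>pcar (cSd2horn n k W). fst F x = fst G x) \<and>
             (\<forall>x\<in>pcar (cSd2horn n k W). \<forall>y\<in>pcar (cSd2horn n k W).
                ple (cSd2horn n k W) x y \<longrightarrow> snd F x y = snd G x y)))"

text \<open>check-p x hat-q: [p] x [q] with product order; (a,b) <= (c,d) is weak iff a = c.\<close>

definition prodpos :: "nat \<Rightarrow> nat \<Rightarrow> (nat \<times> nat) relposet" where
  "prodpos p q = \<lparr> pcar = {0..p} \<times> {0..q},
                   ple = (\<lambda>(a, b) (c, d). a \<le> c \<and> b \<le> d),
                   pweq = (\<lambda>(a, b) (c, d). a = c \<and> b \<le> d) \<rparr>"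

definition Nxi :: "('o, 'm) relcat \<Rightarrow> nat \<Rightarrow> nat \<Rightarrow>
    (((nat \<times> nat) set list \<Rightarrow> 'o) \<times> ((nat \<times> nat) set list \<Rightarrow> (nat \<times> nat) set list \<Rightarrow> 'm)) set" where
  "Nxi M p q = {F. relfun (xi (prodpos p q)) M F}"

definition delta :: "nat \<Rightarrow> nat \<Rightarrow> nat" where
  "delta i j = (if j < i then j else Suc j)"

definition hface where
  "hface p q i F = pullback (prodpos (p - 1) q) (\<lambda>(a, b). (delta i a, b)) F"

definition vface where
  "vface p q i F = pullback (prodpos p (q - 1)) (\<lambda>(a, b). (a, delta i b)) F"

text \<open>A map f : X -> Y of simplicial sets (given levelwise with faces d n i : X_n -> X_{n-1})
is a Kan fibration if every horn Lambda^k[n] -> X (a compatible family of faces x_i, i /= k)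
over an n-simplex y of Y has a filler over y.\<close>

definition kan_fibration :: "(nat \<Rightarrow> 'x set) \<Rightarrow> (nat \<Rightarrow> nat \<Rightarrow> 'x \<Rightarrow> 'x) \<Rightarrow>
    (nat \<Rightarrow> 'y set) \<Rightarrow> (nat \<Rightarrow> nat \<Rightarrow> 'y \<Rightarrow> 'y) \<Rightarrow> (nat \<Rightarrow> 'x \<Rightarrow> 'y) \<Rightarrow> bool" where
  "kan_fibration X dX Y dY f \<longleftrightarrow>
     (\<forall>n k y x. 1 \<le> n \<longrightarrow> k \<le> n \<longrightarrow> y \<in> Y n \<longrightarrow>
        (\<forall>i\<le>n. i \<noteq> k \<longrightarrow> x i \<in> X (n - 1)) \<longrightarrow>
        (\<forall>i j. 2 \<le> n \<longrightarrow> i < j \<longrightarrow> j \<le> n \<longrightarrow> i \<noteq> k \<longrightarrow> j \<noteq> k \<longrightarrow>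
            dX (n - 1) i (x j) = dX (n - 1) (j - 1) (x i)) \<longrightarrow>
        (\<forall>i\<le>n. i \<noteq> k \<longrightarrow> f (n - 1) (x i) = dY n i y) \<longrightarrow>
        (\<exists>z\<in>X n. f n z = y \<and> (\<forall>i\<le>n. i \<noteq> k \<longrightarrow> dX n i z = x i)))"

text \<open>Matching object M_p of the simplicial object p |-> (N_xi M)_{p,*} (p >= 1):
compatible (p+1)-tuples of (p-1)-simplices, as a simplicial set in q.\<close>

definition match_obj where
  "match_obj M p q = {t. (\<forall>i\<le>p. t i \<in> Nxi M (p - 1) q) \<and> (\<forall>i>p. t i = undefined) \<and>
      (2 \<le> p \<longrightarrow> (\<forall>i j. i < j \<longrightarrow> j \<le> p \<longrightarrow>
          hface (p - 1) q i (t j) = hface (p - 1) q (j - 1) (t i)))}"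

definition match_face where
  "match_face p q i t = (\<lambda>j. if j \<le> p then vface (p - 1) q i (t j) else undefined)"

definition match_map where
  "match_map p q F = (\<lambda>j. if j \<le> p then hface p q j F else undefined)"

text \<open>Reedy fibrancy: the matching maps X_p -> M_p X are Kan fibrations for all p
(for p = 0 the matching object is the point, i.e. X_0 is a Kan complex).\<close>

definition Nxi_reedy_fibrant :: "('o, 'm) relcat \<Rightarrow> bool" where
  "Nxi_reedy_fibrant M \<longleftrightarrow>
     kan_fibration (Nxi M 0) (vface 0) (\<lambda>_. (UNIV :: unit set)) (\<lambda>_ _ _. ()) (\<lambda>_ _. ()) \<and>
     (\<forall>p\<ge>1. kan_fibration (Nxi M p) (vface p) (match_obj M p) (match_face p) (match_map p))"

end

theory Submission
  imports Defs "HOL-Library.Product_Lexorder"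
begin

definition sxi :: "'p relposet \<Rightarrow> 'p set list set \<Rightarrow> 'p set list relposet" where
  "sxi P C = \<lparr> pcar = C, ple = (\<lambda>Bs As. set Bs \<subseteq> set As),
      pweq = (\<lambda>Bs As. set Bs \<subseteq> set As \<and> pweq P (pmin P (hd Bs)) (pmin P (hd As))) \<rparr>"

lemma xi_sxi: "xi P = sxi P (xi_car P)" unfolding xi_def sxi_def by simp

lemma sxi_simps[simp]: "pcar (sxi P C) = C" "ple (sxi P C) Bs As = (set Bs \<subseteq> set As)"
  "pweq (sxi P C) Bs As = (set Bs \<subseteq> set As \<and> pweq P (pmin P (hd Bs)) (pmin P (hd As)))"
  unfolding sxi_def by simp_all

definition good :: "'p relposet \<Rightarrow> bool" where
  "good P \<longleftrightarrow> (\<forall>x\<in>pcar P. ple P x x) \<and>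
     (\<forall>x\<in>pcar P. \<forall>y\<in>pcar P. ple P x y \<longrightarrow> ple P y x \<longrightarrow> x = y) \<and>
     (\<forall>x\<in>pcar P. \<forall>y\<in>pcar P. \<forall>z\<in>pcar P. ple P x y \<longrightarrow> ple P y z \<longrightarrow> ple P x z) \<and>
     (\<forall>x\<in>pcar P. \<forall>y\<in>pcar P. pweq P x y \<longrightarrow> ple P x y)"

lemma goodD:
  assumes "good P"
  shows "x \<in> pcar P \<Longrightarrow> ple P x x"
    "x \<in> pcar P \<Longrightarrow> y \<in> pcar P \<Longrightarrow> ple P x y \<Longrightarrow> ple P y x \<Longrightarrow> x = y"
    "x \<in> pcar P \<Longrightarrow> y \<in> pcar P \<Longrightarrow> z \<in> pcar P \<Longrightarrow> ple P x y \<Longrightarrow> ple P y z \<Longrightarrow> ple P x z"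
    "x \<in> pcar P \<Longrightarrow> y \<in> pcar P \<Longrightarrow> pweq P x y \<Longrightarrow> ple P x y"
  using assms unfolding good_def by blast+

definition chn :: "'p relposet \<Rightarrow> 'p set \<Rightarrow> bool" where
  "chn P A \<longleftrightarrow> A \<noteq> {} \<and> finite A \<and> A \<subseteq> pcar P \<and> (\<forall>a\<in>A. \<forall>b\<in>A. ple P a b \<or> ple P b a)"

lemma chn_subset: "chn P A \<Longrightarrow> B \<subseteq> A \<Longrightarrow> B \<noteq> {} \<Longrightarrow> chn P B"
  unfolding chn_def by (auto intro: finite_subset)

lemma xi_car_iff: "As \<in> xi_car P \<longleftrightarrow> As \<noteq> [] \<and> sorted_wrt (\<subset>) As \<and> (\<forall>A\<in>set As. chn P A)"
  by (auto simp: xi_car_def chn_def)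

lemma pmin_ex:
  assumes g: "good P" and c: "chn P A"
  shows "\<exists>m\<in>A. \<forall>b\<in>A. ple P m b"
proof -
  have "B \<subseteq> A \<Longrightarrow> \<exists>m\<in>B. \<forall>b\<in>B. ple P m b" if "finite B" "B \<noteq> {}" for B
    using that
  proof (induction B rule: finite_ne_induct)
    case (singleton x) then show ?case using goodD(1)[OF g] c unfolding chn_def by blast
  next
    case (insert x F)
    then obtain m where m: "m\<in>F" "\<forall>b\<in>F. ple P m b" by blast
    have xA: "x \<in> A" "m \<in> A" using insert m by auto
    have car: "A \<subseteq> pcar P" using c unfolding chn_def by blast
    have xm: "ple P x m \<or> ple P m x" using c xA unfolding chn_def by blast
    show ?case
    proof (cases "ple P x m")
      case True
      have "\<forall>b\<in>insert x F. ple P x b"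
      proof
        fix b assume "b \<in> insert x F"
        then show "ple P x b"
        proof
          assume "b = x" then show ?thesis using goodD(1)[OF g] car xA by blast
        next
          assume "b \<in> F"
          then show ?thesis using goodD(3)[OF g, of x m b] True m car xA insert.prems by blast
        qed
      qed
      then show ?thesis by blast
    next
      case False
      then have "ple P m x" using xm by blast
      then show ?thesis using m by blast
    qed
  qed
  then show ?thesis using c unfolding chn_def by blast
qed

lemma pmin_eqI:
  assumes g: "good P" and c: "chn P A" and "m \<in> A" "\<forall>b\<in>A. ple P m b"
  shows "pmin P A = m"
  unfolding pmin_def
proof (rule the_equality)
  show "m \<in> A \<and> (\<forall>b\<in>A. ple P m b)" using assms by blast
  fix a assume a: "a \<in> A \<and> (\<forall>b\<in>A. ple P a b)"
  have car: "A \<subseteq> pcar P" using c unfolding chn_def by blast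
  show "a = m" using goodD(2)[OF g, of a m] a assms car by blast
qed

lemma pmin_prop:
  assumes g: "good P" and c: "chn P A"
  shows "pmin P A \<in> A" "\<forall>b\<in>A. ple P (pmin P A) b"
proof -
  obtain m where "m\<in>A" "\<forall>b\<in>A. ple P m b" using pmin_ex[OF g c] by blast
  moreover then have "pmin P A = m" using pmin_eqI[OF g c] by blast
  ultimately show "pmin P A \<in> A" "\<forall>b\<in>A. ple P (pmin P A) b" by auto
qed

definition emb :: "('a \<Rightarrow> 'b) \<Rightarrow> 'a relposet \<Rightarrow> 'b relposet \<Rightarrow> bool" where
  "emb g P Q \<longleftrightarrow> (\<forall>x\<in>pcar P. g x \<in> pcar Q) \<and> inj_on g (pcar P) \<and>
     (\<forall>x\<in>pcar P. \<forall>y\<in>pcar P. ple P x y \<longrightarrow> ple Q (g x) (g y)) \<and>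
     (\<forall>x\<in>pcar P. \<forall>y\<in>pcar P. pweq P x y \<longrightarrow> pweq Q (g x) (g y))"

definition iemb :: "('a \<Rightarrow> 'b) \<Rightarrow> 'a relposet \<Rightarrow> 'b relposet \<Rightarrow> bool" where
  "iemb g P Q \<longleftrightarrow> emb g P Q \<and>
     (\<forall>x\<in>pcar P. \<forall>y\<in>pcar P. ple Q (g x) (g y) \<longrightarrow> ple P x y) \<and>
     (\<forall>x\<in>pcar P. \<forall>y\<in>pcar P. pweq Q (g x) (g y) \<longrightarrow> pweq P x y)"

lemma chn_image:
  assumes e: "emb g P Q" and c: "chn P A"
  shows "chn Q (g ` A)"
  unfolding chn_def
proof (intro conjI)
  show "g ` A \<noteq> {}" "finite (g ` A)" using c unfolding chn_def by auto
  show "g ` A \<subseteq> pcar Q" using c e unfolding chn_def emb_def by auto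
  show "\<forall>a\<in>g ` A. \<forall>b\<in>g ` A. ple Q a b \<or> ple Q b a"
  proof (intro ballI)
    fix a b assume "a \<in> g ` A" "b \<in> g ` A"
    then obtain x y where "x \<in> A" "y \<in> A" "a = g x" "b = g y" by blast
    moreover have "ple P x y \<or> ple P y x" using c \<open>x \<in> A\<close> \<open>y \<in> A\<close> unfolding chn_def by blast
    moreover have "x \<in> pcar P" "y \<in> pcar P" using c \<open>x \<in> A\<close> \<open>y \<in> A\<close> unfolding chn_def by auto
    ultimately show "ple Q a b \<or> ple Q b a" using e unfolding emb_def by blast
  qed
qed

lemma pmin_image:
  assumes gP: "good P" and gQ: "good Q" and e: "emb g P Q" and c: "chn P A"
  shows "pmin Q (g ` A) = g (pmin P A)"
proof -
  have car: "A \<subseteq> pcar P" using c unfolding chn_def by blast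
  have p: "pmin P A \<in> A" "\<forall>b\<in>A. ple P (pmin P A) b" using pmin_prop[OF gP c] by auto
  show ?thesis
    apply (rule pmin_eqI[OF gQ chn_image[OF e c]])
    using p e car unfolding emb_def by blast+
qed

lemma sorted_wrt_psub_distinct: "sorted_wrt (\<subset>) xs \<Longrightarrow> distinct xs"
  by (induction xs) auto

lemma sorted_wrt_psub_last: "sorted_wrt (\<subset>) xs \<Longrightarrow> A \<in> set xs \<Longrightarrow> A \<subseteq> last xs"
proof (induction xs)
  case Nil then show ?case by simp
next
  case (Cons x xs)
  show ?case
  proof (cases "xs = []")
    case True then show ?thesis using Cons by simp
  next
    case False
    then have l: "last (x#xs) = last xs" "last xs \<in> set xs" by auto
    show ?thesis
    proof (cases "A = x")
      case True
      then show ?thesis using Cons.prems l by auto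
    next
      case False
      then show ?thesis using Cons l by auto
    qed
  qed
qed

lemma sorted_wrt_psub_hd: "sorted_wrt (\<subset>) xs \<Longrightarrow> A \<in> set xs \<Longrightarrow> hd xs \<subseteq> A"
  by (induction xs) auto

lemma xi_car_last: "As \<in> xi_car P \<Longrightarrow> A \<in> set As \<Longrightarrow> A \<subseteq> last As"
  using sorted_wrt_psub_last unfolding xi_car_iff by blast

lemma xi_car_last_in: "As \<in> xi_car P \<Longrightarrow> last As \<in> set As"
  unfolding xi_car_iff by auto

lemma xi_car_hd_in: "As \<in> xi_car P \<Longrightarrow> hd As \<in> set As"
  unfolding xi_car_iff by auto

lemma image_psubset:
  assumes "inj_on g X" "A \<subset> B" "B \<subseteq> X" shows "g ` A \<subset> g ` B"
proof
  show "g ` A \<subseteq> g ` B" using assms by auto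
  show "g ` A \<noteq> g ` B"
  proof
    assume "g ` A = g ` B"
    moreover have "A \<subseteq> X" using assms by auto
    ultimately have "A = B" using inj_on_image_eq_iff[OF assms(1)] assms(3) by blast
    then show False using assms by blast
  qed
qed

lemma ximap_eq:
  assumes "sorted_wrt (\<subset>) As" "\<forall>A\<in>set As. A \<subseteq> X" "inj_on g X"
  shows "ximap g As = map (\<lambda>A. g ` A) As"
proof -
  have "sorted_wrt (\<subset>) (map (\<lambda>A. g ` A) As)"
    unfolding sorted_wrt_map
  proof (rule sorted_wrt_mono_rel[OF _ assms(1)])
    fix x y assume "x \<in> set As" "y \<in> set As" "x \<subset> y"
    then show "g ` x \<subset> g ` y" by (intro image_psubset[OF assms(3)]) (use assms(2) in auto)
  qed
  then have "distinct (map (\<lambda>A. g ` A) As)" by (rule sorted_wrt_psub_distinct)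
  then show ?thesis unfolding ximap_def by simp
qed

lemma set_ximap: "set (ximap g As) = (\<lambda>A. g ` A) ` set As"
  unfolding ximap_def by simp

lemma ximap_comp: "ximap f (ximap g As) = ximap (f \<circ> g) As"
  unfolding ximap_def remdups_map_remdups by (simp add: image_comp comp_def)

lemma ximap_cong: "(\<And>A x. A \<in> set As \<Longrightarrow> x \<in> A \<Longrightarrow> f x = g x) \<Longrightarrow> ximap f As = ximap g As"
proof -
  assume a: "\<And>A x. A \<in> set As \<Longrightarrow> x \<in> A \<Longrightarrow> f x = g x"
  have "\<forall>A\<in>set As. f ` A = g ` A" using a by (intro ballI image_cong) auto
  then have "map (image f) As = map (image g) As" by (intro map_cong) auto
  then show ?thesis unfolding ximap_def by (rule arg_cong)
qed

lemma ximap_id: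
  assumes "As \<in> xi_car P" "\<And>A x. A \<in> set As \<Longrightarrow> x \<in> A \<Longrightarrow> f x = x"
  shows "ximap f As = As"
proof -
  have "ximap f As = ximap id As" by (rule ximap_cong) (use assms in auto)
  also have "\<dots> = As"
  proof -
    have "distinct As" using assms(1) sorted_wrt_psub_distinct unfolding xi_car_iff by blast
    then show ?thesis unfolding ximap_def by (simp add: distinct_remdups_id)
  qed
  finally show ?thesis .
qed

lemma xi_car_sub_car: "As \<in> xi_car P \<Longrightarrow> A \<in> set As \<Longrightarrow> A \<subseteq> pcar P"
  unfolding xi_car_iff chn_def by blast

lemma ximap_map:
  assumes e: "emb g P Q" and As: "As \<in> xi_car P"
  shows "ximap g As = map (\<lambda>A. g ` A) As"
  apply (rule ximap_eq[of _ "pcar P"])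
  using As e unfolding xi_car_iff emb_def chn_def by auto

lemma ximap_car:
  assumes e: "emb g P Q" and As: "As \<in> xi_car P"
  shows "ximap g As \<in> xi_car Q"
proof -
  have m: "ximap g As = map (\<lambda>A. g ` A) As" by (rule ximap_map[OF e As])
  have sw: "sorted_wrt (\<subset>) As" and sub: "\<forall>A\<in>set As. A \<subseteq> pcar P"
    using As unfolding xi_car_iff chn_def by auto
  have inj: "inj_on g (pcar P)" using e unfolding emb_def by blast
  have "sorted_wrt (\<subset>) (map (\<lambda>A. g ` A) As)"
    unfolding sorted_wrt_map
  proof (rule sorted_wrt_mono_rel[OF _ sw])
    fix x y assume "x \<in> set As" "y \<in> set As" "x \<subset> y"
    then show "g ` x \<subset> g ` y" by (intro image_psubset[OF inj]) (use sub in auto)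
  qed
  then show ?thesis unfolding m xi_car_iff using As chn_image[OF e] unfolding xi_car_iff by auto
qed

lemma hd_ximap:
  assumes e: "emb g P Q" and As: "As \<in> xi_car P"
  shows "hd (ximap g As) = g ` hd As"
  using ximap_map[OF e As] As unfolding xi_car_iff by (simp add: hd_map)

lemma last_ximap:
  assumes e: "emb g P Q" and As: "As \<in> xi_car P"
  shows "last (ximap g As) = g ` last As"
  using ximap_map[OF e As] As unfolding xi_car_iff by (simp add: last_map)

lemma pmin_hd_ximap:
  assumes gP: "good P" and gQ: "good Q" and e: "emb g P Q" and As: "As \<in> xi_car P"
  shows "pmin Q (hd (ximap g As)) = g (pmin P (hd As))"
  unfolding hd_ximap[OF e As]
  by (rule pmin_image[OF gP gQ e]) (use As xi_car_hd_in in \<open>auto simp: xi_car_iff\<close>)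

lemma pmin_hd_car:
  assumes gP: "good P" and As: "As \<in> xi_car P"
  shows "pmin P (hd As) \<in> pcar P"
proof -
  have c: "chn P (hd As)" using As xi_car_hd_in[OF As] unfolding xi_car_iff by blast
  show ?thesis using pmin_prop(1)[OF gP c] c unfolding chn_def by blast
qed

definition pb :: "'a set list set \<Rightarrow> ('a \<Rightarrow> 'b) \<Rightarrow>
    ('b set list \<Rightarrow> 'o) \<times> ('b set list \<Rightarrow> 'b set list \<Rightarrow> 'm) \<Rightarrow>
    ('a set list \<Rightarrow> 'o) \<times> ('a set list \<Rightarrow> 'a set list \<Rightarrow> 'm)" where
  "pb C g F = ((\<lambda>As. if As \<in> C then fst F (ximap g As) else undefined),
     (\<lambda>As Bs. if As \<in> C \<and> Bs \<in> C \<and> set As \<subseteq> set Bs then snd F (ximap g As) (ximap g Bs) else undefined))"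

lemma pb_simps: "fst (pb C g F) As = (if As \<in> C then fst F (ximap g As) else undefined)"
  "snd (pb C g F) As Bs = (if As \<in> C \<and> Bs \<in> C \<and> set As \<subseteq> set Bs then snd F (ximap g As) (ximap g Bs) else undefined)"
  unfolding pb_def by simp_all

lemma pullback_pb: "pullback P g F = pb (xi_car P) g F"
  unfolding pullback_def pb_def xi_def by simp

lemma relfunD:
  assumes "relfun P M F"
  shows "x \<in> pcar P \<Longrightarrow> fst F x \<in> cobj M"
    "x \<in> pcar P \<Longrightarrow> y \<in> pcar P \<Longrightarrow> ple P x y \<Longrightarrow> snd F x y \<in> chom M (fst F x) (fst F y)"
    "x \<in> pcar P \<Longrightarrow> snd F x x = cid M (fst F x)"
    "x \<in> pcar P \<Longrightarrow> y \<in> pcar P \<Longrightarrow> z \<in> pcar P \<Longrightarrow> ple P x y \<Longrightarrow> ple P y z \<Longrightarrow>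
        snd F x z = ccomp M (fst F x) (fst F y) (fst F z) (snd F y z) (snd F x y)"
    "x \<in> pcar P \<Longrightarrow> y \<in> pcar P \<Longrightarrow> ple P x y \<Longrightarrow> pweq P x y \<Longrightarrow> snd F x y \<in> cweq M (fst F x) (fst F y)"
    "x \<notin> pcar P \<Longrightarrow> fst F x = undefined"
    "\<not> (x \<in> pcar P \<and> y \<in> pcar P \<and> ple P x y) \<Longrightarrow> snd F x y = undefined"
  using assms unfolding relfun_def by blast+

lemma relfunI:
  assumes "\<And>x. x \<in> pcar P \<Longrightarrow> fst F x \<in> cobj M"
    "\<And>x y. x \<in> pcar P \<Longrightarrow> y \<in> pcar P \<Longrightarrow> ple P x y \<Longrightarrow> snd F x y \<in> chom M (fst F x) (fst F y)"
    "\<And>x. x \<in> pcar P \<Longrightarrow> snd F x x = cid M (fst F x)"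
    "\<And>x y z. x \<in> pcar P \<Longrightarrow> y \<in> pcar P \<Longrightarrow> z \<in> pcar P \<Longrightarrow> ple P x y \<Longrightarrow> ple P y z \<Longrightarrow>
        snd F x z = ccomp M (fst F x) (fst F y) (fst F z) (snd F y z) (snd F x y)"
    "\<And>x y. x \<in> pcar P \<Longrightarrow> y \<in> pcar P \<Longrightarrow> ple P x y \<Longrightarrow> pweq P x y \<Longrightarrow> snd F x y \<in> cweq M (fst F x) (fst F y)"
    "\<And>x. x \<notin> pcar P \<Longrightarrow> fst F x = undefined"
    "\<And>x y. \<not> (x \<in> pcar P \<and> y \<in> pcar P \<and> ple P x y) \<Longrightarrow> snd F x y = undefined"
  shows "relfun P M F"
  unfolding relfun_def
  by (intro conjI ballI allI impI; (rule assms; assumption))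

lemma pb_relfun:
  assumes gP: "good P" and gQ: "good Q" and e: "emb g P Q"
    and C: "C \<subseteq> xi_car P" and CD: "\<And>As. As \<in> C \<Longrightarrow> ximap g As \<in> D"
    and D: "D \<subseteq> xi_car Q"
    and F: "relfun (sxi Q D) M F"
  shows "relfun (sxi P C) M (pb C g F)"
proof (rule relfunI)
  note FD = relfunD[OF F, simplified]
  have sub: "set (ximap g As) \<subseteq> set (ximap g Bs)" if "set As \<subseteq> set Bs" for As Bs
    using that unfolding set_ximap by auto
  show "fst (pb C g F) x \<in> cobj M" if "x \<in> pcar (sxi P C)" for x
  proof -
    have "fst F (ximap g x) \<in> cobj M" by (rule FD(1)) (use that CD in auto)
    then show ?thesis using that by (simp add: pb_simps)
  qed
  show "snd (pb C g F) x y \<in> chom M (fst (pb C g F) x) (fst (pb C g F) y)"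
    if "x \<in> pcar (sxi P C)" "y \<in> pcar (sxi P C)" "ple (sxi P C) x y" for x y
  proof -
    have "snd F (ximap g x) (ximap g y) \<in> chom M (fst F (ximap g x)) (fst F (ximap g y))"
      by (rule FD(2)) (use that CD sub in auto)
    then show ?thesis using that by (simp add: pb_simps)
  qed
  show "snd (pb C g F) x x = cid M (fst (pb C g F) x)" if "x \<in> pcar (sxi P C)" for x
  proof -
    have "snd F (ximap g x) (ximap g x) = cid M (fst F (ximap g x))"
      by (rule FD(3)) (use that CD in auto)
    then show ?thesis using that by (simp add: pb_simps)
  qed
  show "snd (pb C g F) x z = ccomp M (fst (pb C g F) x) (fst (pb C g F) y) (fst (pb C g F) z)
          (snd (pb C g F) y z) (snd (pb C g F) x y)"
    if "x \<in> pcar (sxi P C)" "y \<in> pcar (sxi P C)" "z \<in> pcar (sxi P C)"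
       "ple (sxi P C) x y" "ple (sxi P C) y z" for x y z
  proof -
    have "snd F (ximap g x) (ximap g z) = ccomp M (fst F (ximap g x)) (fst F (ximap g y)) (fst F (ximap g z))
       (snd F (ximap g y) (ximap g z)) (snd F (ximap g x) (ximap g y))"
      by (rule FD(4)) (use that CD sub in auto)
    moreover have "set x \<subseteq> set z" using that by auto
    ultimately show ?thesis using that by (simp add: pb_simps)
  qed
  show "snd (pb C g F) x y \<in> cweq M (fst (pb C g F) x) (fst (pb C g F) y)"
    if "x \<in> pcar (sxi P C)" "y \<in> pcar (sxi P C)" "ple (sxi P C) x y" "pweq (sxi P C) x y" for x y
  proof -
    have xy: "x \<in> C" "y \<in> C" "set x \<subseteq> set y" "pweq P (pmin P (hd x)) (pmin P (hd y))"
      using that by auto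
    have xc: "x \<in> xi_car P" "y \<in> xi_car P" using xy C by auto
    have "pweq Q (pmin Q (hd (ximap g x))) (pmin Q (hd (ximap g y)))"
      unfolding pmin_hd_ximap[OF gP gQ e xc(1)] pmin_hd_ximap[OF gP gQ e xc(2)]
      using e xy(4) pmin_hd_car[OF gP xc(1)] pmin_hd_car[OF gP xc(2)] unfolding emb_def by blast
    moreover have s2: "set (ximap g x) \<subseteq> set (ximap g y)" by (rule sub[OF xy(3)])
    ultimately have "snd F (ximap g x) (ximap g y) \<in> cweq M (fst F (ximap g x)) (fst F (ximap g y))"
      using FD(5)[OF CD[OF xy(1)] CD[OF xy(2)] s2] by blast
    then show ?thesis using xy by (simp add: pb_simps)
  qed
  show "fst (pb C g F) x = undefined" if "x \<notin> pcar (sxi P C)" for x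
    using that by (simp add: pb_simps)
  show "snd (pb C g F) x y = undefined" if "\<not> (x \<in> pcar (sxi P C) \<and> y \<in> pcar (sxi P C) \<and> ple (sxi P C) x y)" for x y
    using that by (auto simp: pb_simps)
qed


lemma good_restrict:
  assumes g: "good P" and X: "X \<subseteq> pcar P"
  shows "good (P\<lparr>pcar := X\<rparr>)"
  unfolding good_def
proof (intro conjI ballI impI)
  fix x y z
  assume a: "x \<in> pcar (P\<lparr>pcar := X\<rparr>)" "y \<in> pcar (P\<lparr>pcar := X\<rparr>)" "z \<in> pcar (P\<lparr>pcar := X\<rparr>)"
  then have xyz: "x \<in> pcar P" "y \<in> pcar P" "z \<in> pcar P" using X by auto
  show "ple (P\<lparr>pcar := X\<rparr>) x y \<Longrightarrow> ple (P\<lparr>pcar := X\<rparr>) y z \<Longrightarrow> ple (P\<lparr>pcar := X\<rparr>) x z"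
    using goodD(3)[OF g xyz] by simp
next
  fix x assume "x \<in> pcar (P\<lparr>pcar := X\<rparr>)"
  then have "x \<in> pcar P" using X by auto
  then show "ple (P\<lparr>pcar := X\<rparr>) x x" using goodD(1)[OF g] by simp
next
  fix x y assume a: "x \<in> pcar (P\<lparr>pcar := X\<rparr>)" "y \<in> pcar (P\<lparr>pcar := X\<rparr>)"
  then have xy: "x \<in> pcar P" "y \<in> pcar P" using X by auto
  show "ple (P\<lparr>pcar := X\<rparr>) x y \<Longrightarrow> ple (P\<lparr>pcar := X\<rparr>) y x \<Longrightarrow> x = y"
    using goodD(2)[OF g xy] by simp
  show "pweq (P\<lparr>pcar := X\<rparr>) x y \<Longrightarrow> ple (P\<lparr>pcar := X\<rparr>) x y"
    using goodD(4)[OF g xy] by simp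
qed


lemma pmin_restrict[simp]: "pmin (P\<lparr>pcar := X\<rparr>) = pmin P"
  unfolding pmin_def by simp

lemma sxi_restrict[simp]: "sxi (P\<lparr>pcar := X\<rparr>) C = sxi P C"
  unfolding sxi_def by simp

lemma chn_restrict: "chn (P\<lparr>pcar := X\<rparr>) A \<longleftrightarrow> chn P A \<and> A \<subseteq> X" if "X \<subseteq> pcar P"
  using that unfolding chn_def by auto

lemma xi_car_restrict:
  assumes "X \<subseteq> pcar P"
  shows "xi_car (P\<lparr>pcar := X\<rparr>) = {As \<in> xi_car P. \<forall>A\<in>set As. A \<subseteq> X}"
  apply (rule set_eqI)
  using chn_restrict[OF assms] by (auto simp: xi_car_iff)

lemma iemb_emb: "iemb g P Q \<Longrightarrow> emb g P Q" unfolding iemb_def by blast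

lemma iemb_inv:
  assumes "iemb g P Q"
  shows "emb (inv_into (pcar P) g) (Q\<lparr>pcar := g ` pcar P\<rparr>) P"
  using assms unfolding iemb_def emb_def
  by (auto simp: inv_into_f_f inv_into_into inj_on_inv_into)

lemma iemb_roundtrip1:
  assumes e: "iemb g P Q" and As: "As \<in> xi_car P"
  shows "ximap (inv_into (pcar P) g) (ximap g As) = As"
  unfolding ximap_comp
  apply (rule ximap_id[OF As])
  using e xi_car_sub_car[OF As] unfolding iemb_def emb_def by (metis comp_apply inv_into_f_f subsetD)

lemma iemb_roundtrip2:
  assumes As: "As \<in> xi_car Q" and sub: "\<forall>A\<in>set As. A \<subseteq> g ` pcar P"
  shows "ximap g (ximap (inv_into (pcar P) g) As) = As"
  unfolding ximap_comp
  apply (rule ximap_id[OF As])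
  using sub by (metis comp_apply f_inv_into_f subsetD)

section \<open>Gluing\<close>

definition dcl :: "'p relposet \<Rightarrow> 'p set list set \<Rightarrow> bool" where
  "dcl P C \<longleftrightarrow> C \<subseteq> xi_car P \<and> (\<forall>As\<in>C. \<forall>Bs\<in>xi_car P. set Bs \<subseteq> set As \<longrightarrow> Bs \<in> C)"

definition glue where
  "glue I C G = ((\<lambda>As. if \<exists>i\<in>I. As \<in> C i then fst (G (SOME i. i \<in> I \<and> As \<in> C i)) As else undefined),
     (\<lambda>Bs As. if \<exists>i\<in>I. As \<in> C i then snd (G (SOME i. i \<in> I \<and> As \<in> C i)) Bs As else undefined))"

definition agree where
  "agree P C1 G1 C2 G2 \<longleftrightarrow> (\<forall>As\<in>C1 \<inter> C2. fst G1 As = fst G2 As \<and>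
      (\<forall>Bs\<in>xi_car P. set Bs \<subseteq> set As \<longrightarrow> snd G1 Bs As = snd G2 Bs As))"

lemma glue_val:
  assumes dc: "\<forall>i\<in>I. dcl P (C i)" and G: "\<forall>i\<in>I. relfun (sxi P (C i)) M (G i)"
    and ag: "\<forall>i\<in>I. \<forall>j\<in>I. agree P (C i) (G i) (C j) (G j)"
    and i: "i \<in> I" and As: "As \<in> C i"
  shows "fst (glue I C G) As = fst (G i) As" "snd (glue I C G) Bs As = snd (G i) Bs As"
proof -
  define j where "j = (SOME i. i \<in> I \<and> As \<in> C i)"
  have jj: "j \<in> I \<and> As \<in> C j" unfolding j_def by (rule someI[of _ i]) (use i As in auto)
  then have j: "j \<in> I" "As \<in> C j" by auto
  have ex: "\<exists>i\<in>I. As \<in> C i" using i As by blast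
  have g1: "fst (glue I C G) As = fst (G j) As" using ex unfolding glue_def j_def by simp
  have g2: "snd (glue I C G) Bs As = snd (G j) Bs As" using ex unfolding glue_def j_def by simp
  have a: "agree P (C j) (G j) (C i) (G i)" using ag i j by blast
  show "fst (glue I C G) As = fst (G i) As"
    using a j As unfolding g1 agree_def by auto
  show "snd (glue I C G) Bs As = snd (G i) Bs As"
  proof (cases "Bs \<in> xi_car P \<and> set Bs \<subseteq> set As")
    case True
    then show ?thesis using a j As unfolding g2 agree_def by auto
  next
    case False
    have "Bs \<notin> C j \<or> \<not> set Bs \<subseteq> set As" "Bs \<notin> C i \<or> \<not> set Bs \<subseteq> set As"
      using False dc i j unfolding dcl_def by auto
    then have "snd (G j) Bs As = undefined" "snd (G i) Bs As = undefined"
      using relfunD(7)[of "sxi P (C j)" M "G j" Bs As] relfunD(7)[of "sxi P (C i)" M "G i" Bs As] G i j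
      by auto
    then show ?thesis unfolding g2 by simp
  qed
qed

lemma glue_relfun:
  assumes dc: "\<forall>i\<in>I. dcl P (C i)" and G: "\<forall>i\<in>I. relfun (sxi P (C i)) M (G i)"
    and ag: "\<forall>i\<in>I. \<forall>j\<in>I. agree P (C i) (G i) (C j) (G j)"
  shows "relfun (sxi P (\<Union>i\<in>I. C i)) M (glue I C G)"
proof (rule relfunI)
  note gv = glue_val[OF dc G ag]
  have dcD: "Bs \<in> C i" if "i \<in> I" "As \<in> C i" "Bs \<in> (\<Union>i\<in>I. C i)" "set Bs \<subseteq> set As" for i As Bs
    using that dc unfolding dcl_def by blast
  have Gi: "relfun (sxi P (C i)) M (G i)" if "i \<in> I" for i using G that by blast
  show "fst (glue I C G) x \<in> cobj M" if "x \<in> pcar (sxi P (\<Union>i\<in>I. C i))" for x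
    using that gv relfunD(1)[OF Gi] by fastforce
  show "snd (glue I C G) x y \<in> chom M (fst (glue I C G) x) (fst (glue I C G) y)"
    if "x \<in> pcar (sxi P (\<Union>i\<in>I. C i))" "y \<in> pcar (sxi P (\<Union>i\<in>I. C i))" "ple (sxi P (\<Union>i\<in>I. C i)) x y" for x y
  proof -
    have "y \<in> (\<Union>i\<in>I. C i)" using that(2) by simp
    then obtain i where i: "i \<in> I" "y \<in> C i" by blast
    have x: "x \<in> C i" using dcD[OF i, of x] that by auto
    show ?thesis using relfunD(2)[OF Gi[OF i(1)], of x y] gv[OF i(1) i(2)] gv[OF i(1) x] x i that by auto
  qed
  show "snd (glue I C G) x x = cid M (fst (glue I C G) x)" if "x \<in> pcar (sxi P (\<Union>i\<in>I. C i))" for x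
  proof -
    have "x \<in> (\<Union>i\<in>I. C i)" using that by simp
    then obtain i where i: "i \<in> I" "x \<in> C i" by blast
    show ?thesis using relfunD(3)[OF Gi[OF i(1)], of x] gv[OF i(1) i(2)] i by auto
  qed
  show "snd (glue I C G) x z = ccomp M (fst (glue I C G) x) (fst (glue I C G) y) (fst (glue I C G) z)
          (snd (glue I C G) y z) (snd (glue I C G) x y)"
    if "x \<in> pcar (sxi P (\<Union>i\<in>I. C i))" "y \<in> pcar (sxi P (\<Union>i\<in>I. C i))" "z \<in> pcar (sxi P (\<Union>i\<in>I. C i))"
       "ple (sxi P (\<Union>i\<in>I. C i)) x y" "ple (sxi P (\<Union>i\<in>I. C i)) y z" for x y z
  proof -
    have "z \<in> (\<Union>i\<in>I. C i)" using that(3) by simp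
    then obtain i where i: "i \<in> I" "z \<in> C i" by blast
    have y: "y \<in> C i" using dcD[OF i, of y] that by auto
    have x: "x \<in> C i" using dcD[OF i, of x] that by auto
    show ?thesis using relfunD(4)[OF Gi[OF i(1)], of x y z] gv[OF i(1) i(2)] gv[OF i(1) x] gv[OF i(1) y] x y i that
      by auto
  qed
  show "snd (glue I C G) x y \<in> cweq M (fst (glue I C G) x) (fst (glue I C G) y)"
    if "x \<in> pcar (sxi P (\<Union>i\<in>I. C i))" "y \<in> pcar (sxi P (\<Union>i\<in>I. C i))" "ple (sxi P (\<Union>i\<in>I. C i)) x y"
      "pweq (sxi P (\<Union>i\<in>I. C i)) x y" for x y
  proof -
    have "y \<in> (\<Union>i\<in>I. C i)" using that(2) by simp
    then obtain i where i: "i \<in> I" "y \<in> C i" by blast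
    have x: "x \<in> C i" using dcD[OF i, of x] that by auto
    show ?thesis using relfunD(5)[OF Gi[OF i(1)], of x y] gv[OF i(1) i(2)] gv[OF i(1) x] x i that by auto
  qed
  show "fst (glue I C G) x = undefined" if "x \<notin> pcar (sxi P (\<Union>i\<in>I. C i))" for x
    using that unfolding glue_def by auto
  show "snd (glue I C G) x y = undefined"
    if "\<not> (x \<in> pcar (sxi P (\<Union>i\<in>I. C i)) \<and> y \<in> pcar (sxi P (\<Union>i\<in>I. C i)) \<and> ple (sxi P (\<Union>i\<in>I. C i)) x y)" for x y
  proof (cases "\<exists>i\<in>I. y \<in> C i")
    case True
    then obtain i where i: "i \<in> I" "y \<in> C i" by blast
    have "\<not> (x \<in> C i \<and> set x \<subseteq> set y)" using that i by auto
    then show ?thesis using gv(2)[OF i] relfunD(7)[OF Gi[OF i(1)], of x y] by auto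
  next
    case False
    then show ?thesis unfolding glue_def by auto
  qed
qed




definition SL :: "'p relposet \<Rightarrow> 'p set set \<Rightarrow> 'p set list set" where
  "SL P L = {As \<in> xi_car P. set As \<subseteq> L}"

definition downcl :: "'p relposet \<Rightarrow> 'p set set \<Rightarrow> bool" where
  "downcl P L \<longleftrightarrow> (\<forall>A\<in>L. chn P A) \<and> (\<forall>A\<in>L. \<forall>B. B \<subseteq> A \<longrightarrow> B \<noteq> {} \<longrightarrow> B \<in> L)"

definition Wof :: "'p relposet \<Rightarrow> (nat \<Rightarrow> 'p) \<Rightarrow> nat \<Rightarrow> (nat \<times> nat) set" where
  "Wof P h n = {(i, j). i \<le> j \<and> j \<le> n \<and> pweq P (h i) (h j)}"

definition enum :: "'p relposet \<Rightarrow> (nat \<Rightarrow> 'p) \<Rightarrow> nat \<Rightarrow> bool" where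
  "enum P h n \<longleftrightarrow> (\<forall>i\<le>n. h i \<in> pcar P) \<and> (\<forall>i j. i < j \<longrightarrow> j \<le> n \<longrightarrow> ple P (h i) (h j) \<and> h i \<noteq> h j)"

lemma ordW_simps[simp]: "pcar (ordW n W) = {0..n}" "ple (ordW n W) = (\<le>)" "pweq (ordW n W) i j = ((i, j) \<in> W)"
  by (simp_all add: ordW_def)

lemma good_ordW: "W \<subseteq> {(i, j). i \<le> j} \<Longrightarrow> good (ordW n W)"
  unfolding good_def by auto

lemma dcl_SL: "dcl P (SL P L)" unfolding dcl_def SL_def by auto

lemma agree_sym: "agree P C1 G1 C2 G2 \<Longrightarrow> agree P C2 G2 C1 G1"
  unfolding agree_def by auto

lemma agree_refl: "agree P C G C G"
  unfolding agree_def by auto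

lemma enum_inj: assumes "enum P h n" shows "inj_on h {0..n}"
proof (rule inj_onI)
  fix i j assume ij: "i \<in> {0..n}" "j \<in> {0..n}" "h i = h j"
  show "i = j"
  proof (rule ccontr)
    assume "i \<noteq> j"
    then have "i < j \<or> j < i" by arith
    then show False using assms ij unfolding enum_def by (metis atLeastAtMost_iff)
  qed
qed

lemma enum_le:
  assumes g: "good P" and e: "enum P h n" and "i \<le> j" "j \<le> n"
  shows "ple P (h i) (h j)"
proof (cases "i = j")
  case True
  then show ?thesis using goodD(1)[OF g] e assms unfolding enum_def by auto
next
  case False
  then show ?thesis using e assms unfolding enum_def by auto
qed

lemma enum_le_rev:
  assumes g: "good P" and e: "enum P h n" and "i \<le> n" "j \<le> n" "ple P (h i) (h j)"
  shows "i \<le> j"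
proof (rule ccontr)
  assume "\<not> i \<le> j"
  then have "j < i" by simp
  then have "ple P (h j) (h i)" "h j \<noteq> h i" using e assms unfolding enum_def by auto
  moreover have "h i \<in> pcar P" "h j \<in> pcar P" using e assms unfolding enum_def by auto
  ultimately show False using goodD(2)[OF g] assms by metis
qed

lemma enum_iemb:
  assumes g: "good P" and e: "enum P h n"
  shows "iemb h (ordW n (Wof P h n)) P"
  unfolding iemb_def emb_def
proof (intro conjI ballI impI)
  fix x assume "x \<in> pcar (ordW n (Wof P h n))"
  then show "h x \<in> pcar P" using e unfolding enum_def by auto
next
  show "inj_on h (pcar (ordW n (Wof P h n)))" using enum_inj[OF e] by simp
next
  fix x y assume "x \<in> pcar (ordW n (Wof P h n))" "y \<in> pcar (ordW n (Wof P h n))"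
    "ple (ordW n (Wof P h n)) x y"
  then show "ple P (h x) (h y)" using enum_le[OF g e] by auto
next
  fix x y assume "x \<in> pcar (ordW n (Wof P h n))" "y \<in> pcar (ordW n (Wof P h n))"
    "pweq (ordW n (Wof P h n)) x y"
  then show "pweq P (h x) (h y)" unfolding Wof_def by auto
next
  fix x y assume "x \<in> pcar (ordW n (Wof P h n))" "y \<in> pcar (ordW n (Wof P h n))"
    "ple P (h x) (h y)"
  then show "ple (ordW n (Wof P h n)) x y" using enum_le_rev[OF g e] by auto
next
  fix x y assume a: "x \<in> pcar (ordW n (Wof P h n))" "y \<in> pcar (ordW n (Wof P h n))"
    "pweq P (h x) (h y)"
  have "h x \<in> pcar P" "h y \<in> pcar P" using a e unfolding enum_def by auto
  then have "ple P (h x) (h y)" using goodD(4)[OF g] a by blast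
  then have "x \<le> y" using enum_le_rev[OF g e] a by auto
  then show "pweq (ordW n (Wof P h n)) x y" using a unfolding Wof_def by auto
qed

lemma glue_step:
  assumes g: "good P" and dc: "downcl P L" and e: "enum P h n" and kn: "k \<le> n"
    and T: "T = h ` {0..n}" and nT: "T \<notin> L" "T - {h k} \<notin> L"
    and hc: "\<And>B. B \<subseteq> T \<Longrightarrow> B \<noteq> {} \<Longrightarrow> B \<noteq> T \<Longrightarrow> B \<noteq> T - {h k} \<Longrightarrow> B \<in> L"
    and he: "horn_extension M n k (Wof P h n)"
    and G: "relfun (sxi P (SL P L)) M G"
  shows "\<exists>G'. relfun (sxi P (SL P (L \<union> {T, T - {h k}}))) M G' \<and>
     (\<forall>As\<in>SL P L. fst G' As = fst G As \<and> (\<forall>Bs. snd G' Bs As = snd G Bs As))"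
proof -
  define W where "W = Wof P h n"
  define Od where "Od = ordW n W"
  have gO: "good Od" unfolding Od_def W_def by (rule good_ordW) (auto simp: Wof_def)
  have ie: "iemb h Od P" unfolding Od_def W_def by (rule enum_iemb[OF g e])
  have eh: "emb h Od P" using ie by (rule iemb_emb)
  have inj: "inj_on h {0..n}" by (rule enum_inj[OF e])
  have carO: "pcar Od = {0..n}" unfolding Od_def by simp
  define Hc where "Hc = pcar (cSd2horn n k W)"
  have Hc_eq: "Hc = {Cs \<in> xi_car Od. last Cs \<noteq> {0..n} \<and> last Cs \<noteq> {0..n} - {k}}"
    unfolding Hc_def cSd2horn_def Od_def xi_def by simp
  have horn_sxi: "cSd2horn n k W = sxi Od Hc"
    unfolding Hc_def cSd2horn_def Od_def xi_def sxi_def by simp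
  have Tdiff: "T - {h k} = h ` ({0..n} - {k})"
    using T inj kn by (simp add: inj_on_image_set_diff)
  have HcC: "Hc \<subseteq> xi_car Od" using Hc_eq by auto
  have SLC: "SL P L \<subseteq> xi_car P" unfolding SL_def by auto
  have HcL: "ximap h Cs \<in> SL P L" if "Cs \<in> Hc" for Cs
  proof -
    have Cs: "Cs \<in> xi_car Od" "last Cs \<noteq> {0..n}" "last Cs \<noteq> {0..n} - {k}" using that Hc_eq by auto
    have lsub: "last Cs \<subseteq> {0..n}" using xi_car_sub_car[OF Cs(1) xi_car_last_in[OF Cs(1)]] carO by simp
    have lne: "last Cs \<noteq> {}" using Cs(1) xi_car_last_in[OF Cs(1)] unfolding xi_car_iff chn_def by blast
    have "h ` last Cs \<in> L"
    proof (rule hc)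
      show "h ` last Cs \<subseteq> T" using lsub T by auto
      show "h ` last Cs \<noteq> {}" using lne by auto
      show "h ` last Cs \<noteq> T" using inj_on_image_eq_iff[OF inj lsub, of "{0..n}"] T Cs(2) by auto
      show "h ` last Cs \<noteq> T - {h k}"
        using inj_on_image_eq_iff[OF inj lsub, of "{0..n} - {k}"] Cs(3) Tdiff by auto
    qed
    moreover have "h ` A \<subseteq> h ` last Cs" if "A \<in> set Cs" for A
      using xi_car_last[OF Cs(1) that] by auto
    moreover have "h ` A \<noteq> {}" if "A \<in> set Cs" for A
      using Cs(1) that unfolding xi_car_iff chn_def by auto
    ultimately have "\<forall>B\<in>set (ximap h Cs). B \<in> L" using dc unfolding downcl_def set_ximap by blast
    then show ?thesis unfolding SL_def using ximap_car[OF eh Cs(1)] by auto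
  qed
  have Gh: "relfun (sxi Od Hc) M (pb Hc h G)"
    by (rule pb_relfun[OF gO g eh HcC HcL SLC G])
  then have "relfun (cSd2horn n k W) M (pb Hc h G)" using horn_sxi by simp
  from he[unfolded horn_extension_def W_def[symmetric], rule_format, OF this]
  obtain FT where FT: "relfun (xi Od) M FT" "\<forall>x\<in>Hc. fst FT x = fst (pb Hc h G) x"
     "\<forall>x\<in>Hc. \<forall>y\<in>Hc. set x \<subseteq> set y \<longrightarrow> snd FT x y = snd (pb Hc h G) x y"
    unfolding horn_sxi Od_def[symmetric] by auto
  define hi where "hi = inv_into {0..n} h"
  have Tsub: "T \<subseteq> pcar P" using e T unfolding enum_def by auto
  define PT where "PT = P\<lparr>pcar := T\<rparr>"
  have gPT: "good PT" using good_restrict[OF g Tsub] PT_def by simp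
  have ehi: "emb hi PT Od" using iemb_inv[OF ie] unfolding carO hi_def PT_def T by simp
  define CT where "CT = xi_car PT"
  have CT_eq: "CT = {As \<in> xi_car P. \<forall>A\<in>set As. A \<subseteq> T}"
    using xi_car_restrict[OF Tsub] unfolding PT_def CT_def by simp
  have F2: "relfun (sxi P CT) M (pb CT hi FT)"
    using pb_relfun[OF gPT gO ehi _ ximap_car[OF ehi] _ FT(1)[unfolded xi_sxi]]
    unfolding CT_def PT_def by simp
  have key: "ximap hi Xs \<in> Hc \<and> ximap h (ximap hi Xs) = Xs \<and> ximap hi Xs \<in> xi_car Od"
    if "Xs \<in> SL P L \<inter> CT" for Xs
  proof -
    have X: "Xs \<in> xi_car PT" "set Xs \<subseteq> L" "Xs \<in> xi_car P" using that CT_def SL_def by auto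
    have c: "ximap hi Xs \<in> xi_car Od" by (rule ximap_car[OF ehi X(1)])
    have l: "last (ximap hi Xs) = hi ` last Xs" by (rule last_ximap[OF ehi X(1)])
    have lL: "last Xs \<in> L" using X xi_car_last_in by blast
    have aT: "\<forall>A\<in>set Xs. A \<subseteq> T" using that CT_eq by auto
    have lT: "last Xs \<subseteq> T" using aT xi_car_last_in[OF X(3)] by blast
    have rt: "h ` (hi ` last Xs) = last Xs" using lT T unfolding hi_def by (simp add: image_inv_into_cancel)
    have n1: "hi ` last Xs \<noteq> {0..n}" using rt lL nT T by auto
    have n2: "hi ` last Xs \<noteq> {0..n} - {k}" using rt lL nT Tdiff by auto
    have rt2: "ximap h (ximap hi Xs) = Xs"
      unfolding hi_def using iemb_roundtrip2[OF X(3), of h Od] CT_eq that carO T by auto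
    show ?thesis using c l n1 n2 rt2 Hc_eq by auto
  qed
  have agr: "agree P (SL P L) G CT (pb CT hi FT)"
    unfolding agree_def
  proof (intro ballI conjI impI)
    fix As assume As: "As \<in> SL P L \<inter> CT"
    have AsC: "As \<in> CT" using As by blast
    show "fst G As = fst (pb CT hi FT) As"
      using key[OF As] FT(2) AsC by (simp add: pb_simps)
    fix Bs assume Bs: "Bs \<in> xi_car P" "set Bs \<subseteq> set As"
    have BsI: "Bs \<in> SL P L \<inter> CT" using Bs As unfolding SL_def CT_eq by auto
    have sub: "set (ximap hi Bs) \<subseteq> set (ximap hi As)" using Bs unfolding set_ximap by auto
    show "snd G Bs As = snd (pb CT hi FT) Bs As"
      using key[OF As] key[OF BsI] FT(3) sub AsC BsI Bs by (simp add: pb_simps)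
  qed
  define C where "C = (\<lambda>b::bool. if b then SL P L else CT)"
  define GG where "GG = (\<lambda>b::bool. if b then G else pb CT hi FT)"
  have dcCT: "dcl P CT" unfolding dcl_def CT_eq by auto
  have dcs: "\<forall>i\<in>UNIV. dcl P (C i)" unfolding C_def using dcl_SL dcCT by auto
  have Gs: "\<forall>i\<in>UNIV. relfun (sxi P (C i)) M (GG i)" unfolding C_def GG_def using G F2 by auto
  have ags: "\<forall>i\<in>UNIV. \<forall>j\<in>UNIV. agree P (C i) (GG i) (C j) (GG j)"
  proof (intro ballI)
    fix i j :: bool
    show "agree P (C i) (GG i) (C j) (GG j)"
      by (cases i; cases j) (simp_all only: C_def GG_def if_True if_False agr agree_sym[OF agr] agree_refl)
  qed
  have U: "SL P L \<union> CT = SL P (L \<union> {T, T - {h k}})"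
  proof (intro equalityI subsetI)
    fix As assume "As \<in> SL P L \<union> CT"
    then show "As \<in> SL P (L \<union> {T, T - {h k}})"
    proof
      assume "As \<in> SL P L" then show ?thesis unfolding SL_def by auto
    next
      assume a: "As \<in> CT"
      have "A \<in> L \<union> {T, T - {h k}}" if "A \<in> set As" for A
      proof -
        have "A \<subseteq> T" "A \<noteq> {}" using a that unfolding CT_eq xi_car_iff chn_def by auto
        then show ?thesis using hc[of A] by auto
      qed
      then show ?thesis using a unfolding CT_eq SL_def by auto
    qed
  next
    fix As assume a: "As \<in> SL P (L \<union> {T, T - {h k}})"
    have As: "As \<in> xi_car P" "set As \<subseteq> L \<union> {T, T - {h k}}" using a unfolding SL_def by auto
    have lst: "last As \<in> L \<union> {T, T - {h k}}" using As xi_car_last_in by blast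
    show "As \<in> SL P L \<union> CT"
    proof (cases "last As \<in> L")
      case True
      have "A \<in> L" if "A \<in> set As" for A
      proof -
        have "A \<subseteq> last As" "A \<noteq> {}" using xi_car_last[OF As(1) that] As(1) that
          unfolding xi_car_iff chn_def by auto
        then show ?thesis using dc True unfolding downcl_def by blast
      qed
      then show ?thesis using As unfolding SL_def by auto
    next
      case False
      then have "last As \<subseteq> T" using lst by auto
      then have "\<forall>A\<in>set As. A \<subseteq> T" using xi_car_last[OF As(1)] by blast
      then show ?thesis using As unfolding CT_eq by auto
    qed
  qed
  have UC: "(\<Union>i\<in>UNIV. C i) = SL P (L \<union> {T, T - {h k}})"
    using U unfolding C_def by (auto split: if_splits)
  have R: "relfun (sxi P (SL P (L \<union> {T, T - {h k}}))) M (glue UNIV C GG)"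
    using glue_relfun[OF dcs Gs ags] UC by simp
  have A: "\<forall>As\<in>SL P L. fst (glue UNIV C GG) As = fst G As \<and> (\<forall>Bs. snd (glue UNIV C GG) Bs As = snd G Bs As)"
    using glue_val[OF dcs Gs ags, of True] unfolding C_def GG_def by simp
  show ?thesis using R A by blast
qed




definition pairc :: "'p set set \<Rightarrow> ('p set \<Rightarrow> 'p) \<Rightarrow> 'p set set \<Rightarrow> bool" where
  "pairc Mi cc L \<longleftrightarrow> (\<forall>T\<in>Mi. T \<in> L \<longleftrightarrow> insert (cc T) T \<in> L)"

lemma finite_chn: "finite (pcar P) \<Longrightarrow> finite (Collect (chn P))"
  by (rule finite_subset[of _ "Pow (pcar P)"]) (auto simp: chn_def)

lemma SL_all: "SL P (Collect (chn P)) = xi_car P" unfolding SL_def by (auto simp: xi_car_iff)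

lemma extend_all_aux:
  assumes g: "good P" and fin: "finite (pcar P)"
    and Mi: "Mi \<subseteq> Collect (chn P)"
    and A1: "\<And>T. T \<in> Mi \<Longrightarrow> insert (cc T) T \<in> Mi \<and> T - {cc T} \<in> Mi \<and> cc (insert (cc T) T) = cc T \<and> cc (T - {cc T}) = cc T"
    and A2: "\<And>U y. U \<in> Mi \<Longrightarrow> cc U \<in> U \<Longrightarrow> y \<in> U \<Longrightarrow> y \<noteq> cc U \<Longrightarrow> U - {y} \<in> Mi \<Longrightarrow> m (insert (cc (U - {y})) (U - {y})) < (m U :: nat)"
    and A3: "\<And>U. U \<in> Mi \<Longrightarrow> cc U \<in> U \<Longrightarrow> \<exists>h n k. enum P h n \<and> k \<le> n \<and> U = h ` {0..n} \<and> h k = cc U \<and> horn_extension M n k (Wof P h n)"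
  shows "card (Collect (chn P) - L) = N \<Longrightarrow> relfun (sxi P (SL P L)) M G \<Longrightarrow> Collect (chn P) - Mi \<subseteq> L \<Longrightarrow> downcl P L \<Longrightarrow> pairc Mi cc L \<Longrightarrow>
    \<exists>F. relfun (xi P) M F \<and> (\<forall>As\<in>SL P L. fst F As = fst G As \<and> (\<forall>Bs. snd F Bs As = snd G Bs As))"
proof (induction N arbitrary: L G rule: less_induct)
  case (less N)
  note G = less.prems(2) and cL = less.prems(3) and dcL = less.prems(4) and pcL = less.prems(5)
  show ?case
  proof (cases "Collect (chn P) \<subseteq> L")
    case True
    have "L \<subseteq> Collect (chn P)" using dcL unfolding downcl_def by auto
    then have "L = Collect (chn P)" using True by auto
    then have "SL P L = xi_car P" using SL_all by simp
    then show ?thesis using G xi_sxi[of P] by (intro exI[of _ G]) auto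
  next
    case False
    then obtain T0 where T0: "chn P T0" "T0 \<notin> L" by auto
    then have T0M: "T0 \<in> Mi" using cL by auto
    define Ups where "Ups = {insert (cc T) T | T. T \<in> Mi \<and> T \<notin> L}"
    have "insert (cc T0) T0 \<in> Ups" using T0 T0M unfolding Ups_def by auto
    then obtain U where U: "U \<in> Ups" and Umin: "\<And>V. V \<in> Ups \<Longrightarrow> m U \<le> m V"
      using ex_has_least_nat[of "\<lambda>V. V \<in> Ups" _ m] by blast
    then obtain T1 where T1: "T1 \<in> Mi" "T1 \<notin> L" "U = insert (cc T1) T1" unfolding Ups_def by auto
    have UM: "U \<in> Mi" and ccU: "cc U = cc T1" using A1[OF T1(1)] T1(3) by auto
    have ccUU: "cc U \<in> U" using T1(3) ccU by auto
    have UL: "U \<notin> L" using pcL T1 unfolding pairc_def by auto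
    define T' where "T' = U - {cc U}"
    have T'M: "T' \<in> Mi" and ccT': "cc T' = cc U" using A1[OF UM] T'_def by auto
    have insT': "insert (cc T') T' = U" using ccT' ccUU T'_def by auto
    have T'L: "T' \<notin> L" using pcL T'M insT' UL unfolding pairc_def by auto
    obtain h n k where hnk: "enum P h n" "k \<le> n" "U = h ` {0..n}" "h k = cc U" "horn_extension M n k (Wof P h n)"
      using A3[OF UM ccUU] by blast
    have hc: "B \<in> L" if B: "B \<subseteq> U" "B \<noteq> {}" "B \<noteq> U" "B \<noteq> U - {h k}" for B
    proof -
      have "\<not> (U - B \<subseteq> {cc U})"
      proof
        assume "U - B \<subseteq> {cc U}"
        then have "B = U \<or> B = U - {cc U}" using B(1) by auto
        then show False using B hnk(4) by auto
      qed
      then obtain y where y: "y \<in> U" "y \<notin> B" "y \<noteq> cc U" by auto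
      define V where "V = U - {y}"
      have BV: "B \<subseteq> V" using B y V_def by auto
      have cU: "chn P U" using UM Mi by auto
      have cV: "chn P V" using chn_subset[OF cU, of V] BV B(2) V_def by auto
      have "V \<in> L"
      proof (cases "V \<in> Mi")
        case False then show ?thesis using cL cV by auto
      next
        case True
        show ?thesis
        proof (rule ccontr)
          assume "V \<notin> L"
          then have "insert (cc V) V \<in> Ups" using True unfolding Ups_def by auto
          then have "m U \<le> m (insert (cc V) V)" by (rule Umin)
          moreover have "m (insert (cc V) V) < m U" using A2[OF UM ccUU y(1) y(3)] True V_def by simp
          ultimately show False by simp
        qed
      qed
      then show ?thesis using dcL BV B(2) unfolding downcl_def by blast
    qed
    have hk: "T' = U - {h k}" using T'_def hnk(4) by simp
    obtain G' where G': "relfun (sxi P (SL P (L \<union> {U, U - {h k}}))) M G'"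
        "\<forall>As\<in>SL P L. fst G' As = fst G As \<and> (\<forall>Bs. snd G' Bs As = snd G Bs As)"
      using glue_step[OF g dcL hnk(1) hnk(2) hnk(3) UL T'L[unfolded hk] hc hnk(5) G] by blast
    define L' where "L' = L \<union> {U, T'}"
    have L'eq: "L \<union> {U, U - {h k}} = L'" unfolding L'_def hk by simp
    have chU: "chn P U" "chn P T'" using UM T'M Mi by auto
    have dcL': "downcl P L'"
      unfolding downcl_def
    proof (intro conjI ballI allI impI)
      fix A assume "A \<in> L'" then show "chn P A" using dcL chU unfolding L'_def downcl_def by auto
    next
      fix A B assume A: "A \<in> L'" and B: "B \<subseteq> A" "B \<noteq> {}"
      consider "A \<in> L" | "A = U" | "A = T'" using A unfolding L'_def by auto
      then show "B \<in> L'"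
      proof cases
        case 1 then show ?thesis using dcL B unfolding downcl_def L'_def by blast
      next
        case 2 then show ?thesis using hc[of B] B hk unfolding L'_def by blast
      next
        case 3
        have "B \<subseteq> U" "B \<noteq> U" using B 3 T'_def ccUU by auto
        then show ?thesis using hc[of B] B hk unfolding L'_def by blast
      qed
    qed
    have pcL': "pairc Mi cc L'"
      unfolding pairc_def
    proof (intro ballI)
      fix T assume TM: "T \<in> Mi"
      have a1: "cc (insert (cc T) T) = cc T" using A1[OF TM] by blast
      have "T \<in> {U, T'} \<longleftrightarrow> insert (cc T) T \<in> {U, T'}"
      proof
        assume "T \<in> {U, T'}"
        then show "insert (cc T) T \<in> {U, T'}" using ccUU insT' by (auto simp: insert_absorb)
      next
        assume I: "insert (cc T) T \<in> {U, T'}"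
        show "T \<in> {U, T'}"
        proof (cases "insert (cc T) T = U")
          case True
          show ?thesis
          proof (cases "cc T \<in> T")
            case True then show ?thesis using \<open>insert (cc T) T = U\<close> by (simp add: insert_absorb)
          next
            case False
            then have "T = U - {cc T}" using \<open>insert (cc T) T = U\<close> by auto
            moreover have "cc T = cc U" using a1 \<open>insert (cc T) T = U\<close> by simp
            ultimately show ?thesis unfolding T'_def by simp
          qed
        next
          case False
          then have e: "insert (cc T) T = T'" using I by auto
          then have "cc T' = cc T" using a1 by simp
          moreover have "cc T \<in> T'" using e by auto
          ultimately have "cc U \<in> T'" using ccT' by simp
          then show ?thesis unfolding T'_def by simp
        qed
      qed
      then show "T \<in> L' \<longleftrightarrow> insert (cc T) T \<in> L'"
        using pcL TM unfolding pairc_def L'_def by auto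
    qed
    have cL': "Collect (chn P) - Mi \<subseteq> L'" using cL unfolding L'_def by auto
    have lt: "card (Collect (chn P) - L') < N"
      unfolding less.prems(1)[symmetric]
    proof (rule psubset_card_mono)
      show "finite (Collect (chn P) - L)" using finite_chn[OF fin] by auto
      show "Collect (chn P) - L' \<subset> Collect (chn P) - L" using chU UL unfolding L'_def by auto
    qed
    obtain F where F: "relfun (xi P) M F" "\<forall>As\<in>SL P L'. fst F As = fst G' As \<and> (\<forall>Bs. snd F Bs As = snd G' Bs As)"
      using less.IH[OF lt refl G'(1)[unfolded L'eq] cL' dcL' pcL'] by blast
    have "SL P L \<subseteq> SL P L'" unfolding SL_def L'_def by auto
    then show ?thesis using F G'(2) by (intro exI[of _ F]) auto
  qed
qed

lemma extend_all:
  assumes g: "good P" and fin: "finite (pcar P)"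
    and Mi: "Mi \<subseteq> Collect (chn P)"
    and A1: "\<And>T. T \<in> Mi \<Longrightarrow> insert (cc T) T \<in> Mi \<and> T - {cc T} \<in> Mi \<and> cc (insert (cc T) T) = cc T \<and> cc (T - {cc T}) = cc T"
    and A2: "\<And>U y. U \<in> Mi \<Longrightarrow> cc U \<in> U \<Longrightarrow> y \<in> U \<Longrightarrow> y \<noteq> cc U \<Longrightarrow> U - {y} \<in> Mi \<Longrightarrow> m (insert (cc (U - {y})) (U - {y})) < (m U :: nat)"
    and A3: "\<And>U. U \<in> Mi \<Longrightarrow> cc U \<in> U \<Longrightarrow> \<exists>h n k. enum P h n \<and> k \<le> n \<and> U = h ` {0..n} \<and> h k = cc U \<and> horn_extension M n k (Wof P h n)"
    and up: "\<And>A B. A \<in> Mi \<Longrightarrow> chn P B \<Longrightarrow> A \<subseteq> B \<Longrightarrow> B \<in> Mi"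
    and G: "relfun (sxi P (SL P (Collect (chn P) - Mi))) M G"
  shows "\<exists>F. relfun (xi P) M F \<and> (\<forall>As\<in>SL P (Collect (chn P) - Mi). fst F As = fst G As \<and> (\<forall>Bs. snd F Bs As = snd G Bs As))"
proof -
  have dc: "downcl P (Collect (chn P) - Mi)"
    unfolding downcl_def using up chn_subset by blast
  have pc: "pairc Mi cc (Collect (chn P) - Mi)" unfolding pairc_def using A1 by auto
  show ?thesis by (rule extend_all_aux[OF g fin Mi A1 A2 A3 refl G _ dc pc]) auto
qed




lemma pp_simps[simp]:
  "pcar (prodpos p q) = {0..p} \<times> {0..q}"
  "ple (prodpos p q) x y \<longleftrightarrow> fst x \<le> fst y \<and> snd x \<le> snd y"
  "pweq (prodpos p q) x y \<longleftrightarrow> fst x = fst y \<and> snd x \<le> snd y"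
  unfolding prodpos_def by (simp_all add: case_prod_beta)

lemma good_pp: "good (prodpos p q)"
  unfolding good_def by (auto simp: prod_eq_iff)

lemma finite_pp: "finite (pcar (prodpos p q))" by simp

lemma chn_pp: "chn (prodpos p q) A \<longleftrightarrow> A \<noteq> {} \<and> finite A \<and> A \<subseteq> {0..p} \<times> {0..q} \<and>
   (\<forall>x\<in>A. \<forall>y\<in>A. (fst x \<le> fst y \<and> snd x \<le> snd y) \<or> (fst y \<le> fst x \<and> snd y \<le> snd x))"
  unfolding chn_def by simp

definition MiS :: "nat \<Rightarrow> nat \<Rightarrow> nat \<Rightarrow> (nat \<times> nat) set set" where
  "MiS p n k = {A. chn (prodpos p n) A \<and> {0..p} \<subseteq> fst ` A \<and> {0..n} - {k} \<subseteq> snd ` A}"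

lemma MiS_chn: "MiS p n k \<subseteq> Collect (chn (prodpos p n))" unfolding MiS_def by auto

lemma MiS_up:
  assumes "A \<in> MiS p n k" "chn (prodpos p n) B" "A \<subseteq> B" shows "B \<in> MiS p n k"
proof -
  have "fst ` A \<subseteq> fst ` B" "snd ` A \<subseteq> snd ` B" using assms(3) by auto
  then show ?thesis using assms unfolding MiS_def by blast
qed

lemma row_props:
  assumes A: "A \<in> MiS p n k" and r: "r \<le> n" "r \<noteq> k"
  shows "finite {a. (a, r) \<in> A}" "{a. (a, r) \<in> A} \<noteq> {}" "\<forall>a\<in>{a. (a, r) \<in> A}. a \<le> p"
proof -
  have c: "chn (prodpos p n) A" "{0..n} - {k} \<subseteq> snd ` A" using A unfolding MiS_def by auto
  have fA: "finite A" using c(1) unfolding chn_pp by blast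
  have "{a. (a, r) \<in> A} \<subseteq> fst ` A" by force
  then show "finite {a. (a, r) \<in> A}" using fA by (meson finite_imageI finite_subset)
  have "r \<in> snd ` A" using c(2) r by auto
  then obtain x where "x \<in> A" "snd x = r" by auto
  then have "(fst x, r) \<in> A" by (metis prod.collapse)
  then show "{a. (a, r) \<in> A} \<noteq> {}" by auto
  show "\<forall>a\<in>{a. (a, r) \<in> A}. a \<le> p" using c(1) unfolding chn_pp by auto
qed

lemma MiS_D:
  assumes "A \<in> MiS p n k"
  shows "finite A" "A \<noteq> {}" "\<And>x. x \<in> A \<Longrightarrow> fst x \<le> p \<and> snd x \<le> n"
    "\<And>x y. x \<in> A \<Longrightarrow> y \<in> A \<Longrightarrow> (fst x \<le> fst y \<and> snd x \<le> snd y) \<or> (fst y \<le> fst x \<and> snd y \<le> snd x)"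
    "{0..p} \<subseteq> fst ` A" "{0..n} - {k} \<subseteq> snd ` A" "chn (prodpos p n) A"
  using assms unfolding MiS_def chn_pp by (auto simp: mem_Times_iff)

lemma arith1: "1 \<le> (c::nat) \<Longrightarrow> (c - 1) * (p + 1) + x < c * (p + 1) + x"
  by (cases c) auto

lemma arith2: "(a::nat) \<le> c \<Longrightarrow> x < y \<Longrightarrow> a * (p + 1) + x < c * (p + 1) + y"
  using mult_le_mono1[of a c "p+1"] by linarith

section \<open>Lower case k < n\<close>

definition astL :: "nat \<Rightarrow> (nat \<times> nat) set \<Rightarrow> nat" where "astL k A = Min {a. (a, Suc k) \<in> A}"
definition ccL :: "nat \<Rightarrow> (nat \<times> nat) set \<Rightarrow> nat \<times> nat" where "ccL k A = (astL k A, k)"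
definition mL :: "nat \<Rightarrow> nat \<Rightarrow> (nat \<times> nat) set \<Rightarrow> nat" where "mL p k A = card A * (p + 1) + (p - astL k A)"

lemma astL_props:
  assumes A: "A \<in> MiS p n k" and kn: "k < n"
  shows "(astL k A, Suc k) \<in> A" "\<And>a. (a, Suc k) \<in> A \<Longrightarrow> astL k A \<le> a" "astL k A \<le> p"
proof -
  have r: "Suc k \<le> n" "Suc k \<noteq> k" using kn by auto
  note rp = row_props[OF A r]
  have m1: "(astL k A, Suc k) \<in> A" unfolding astL_def using Min_in[OF rp(1) rp(2)] by simp
  then show "(astL k A, Suc k) \<in> A" .
  show "\<And>a. (a, Suc k) \<in> A \<Longrightarrow> astL k A \<le> a" unfolding astL_def using Min_le[OF rp(1)] by simp
  show "astL k A \<le> p" using rp(3) m1 by auto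
qed

lemma astL_ins: "astL k (insert (x, k) A) = astL k A"
  unfolding astL_def by (rule arg_cong[where f=Min]) auto

lemma astL_del: "astL k (A - {(x, k)}) = astL k A"
  unfolding astL_def by (rule arg_cong[where f=Min]) auto

lemma L_comp:
  assumes A: "A \<in> MiS p n k" and kn: "k < n" and y: "y \<in> A"
  shows "(astL k A \<le> fst y \<and> k \<le> snd y) \<or> (fst y \<le> astL k A \<and> snd y \<le> k)"
proof -
  have z: "(astL k A, Suc k) \<in> A" and mn: "\<And>a. (a, Suc k) \<in> A \<Longrightarrow> astL k A \<le> a"
    using astL_props[OF A kn] by auto
  have ch: "(fst y \<le> astL k A \<and> snd y \<le> Suc k) \<or> (astL k A \<le> fst y \<and> Suc k \<le> snd y)"
    using MiS_D(4)[OF A y z] by simp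
  then show ?thesis
  proof
    assume a: "fst y \<le> astL k A \<and> snd y \<le> Suc k"
    show ?thesis
    proof (cases "snd y = Suc k")
      case True
      then have "(fst y, Suc k) \<in> A" using y by (metis prod.collapse)
      then have "astL k A \<le> fst y" by (rule mn)
      then show ?thesis using True by auto
    next
      case False then show ?thesis using a by auto
    qed
  next
    assume "astL k A \<le> fst y \<and> Suc k \<le> snd y" then show ?thesis by auto
  qed
qed

lemma L_ins:
  assumes A: "A \<in> MiS p n k" and kn: "k < n"
  shows "insert (ccL k A) A \<in> MiS p n k"
proof -
  have le: "astL k A \<le> p" using astL_props[OF A kn] by auto
  have lc: "\<forall>y\<in>A. (astL k A \<le> fst y \<and> k \<le> snd y) \<or> (fst y \<le> astL k A \<and> snd y \<le> k)"
    using L_comp[OF A kn] by blast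
  have ch: "\<forall>x\<in>A. \<forall>y\<in>A. (fst x \<le> fst y \<and> snd x \<le> snd y) \<or> (fst y \<le> fst x \<and> snd y \<le> snd x)"
    using MiS_D(4)[OF A] by blast
  have sub: "A \<subseteq> {0..p} \<times> {0..n}" using MiS_D(3)[OF A] by (auto simp: mem_Times_iff)
  have "chn (prodpos p n) (insert (ccL k A) A)"
    unfolding chn_pp ccL_def using MiS_D(1)[OF A] le kn sub lc ch by auto
  then show ?thesis using A unfolding MiS_def by (auto dest: image_mono)
qed

lemma L_del:
  assumes A: "A \<in> MiS p n k" and kn: "k < n"
  shows "A - {ccL k A} \<in> MiS p n k"
proof -
  have z: "(astL k A, Suc k) \<in> A - {ccL k A}" using astL_props[OF A kn] unfolding ccL_def by auto
  have ch: "chn (prodpos p n) (A - {ccL k A})" using chn_subset[OF MiS_D(7)[OF A], of "A - {ccL k A}"] z by auto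
  have f: "{0..p} \<subseteq> fst ` (A - {ccL k A})"
  proof
    fix a assume "a \<in> {0..p}"
    then obtain x where x: "x \<in> A" "fst x = a" using MiS_D(5)[OF A] by auto
    show "a \<in> fst ` (A - {ccL k A})"
    proof (cases "x = ccL k A")
      case True
      then have "a = astL k A" using x unfolding ccL_def by auto
      then show ?thesis using z by force
    next
      case False
      then show ?thesis using x by force
    qed
  qed
  have s: "{0..n} - {k} \<subseteq> snd ` (A - {ccL k A})"
  proof
    fix b assume b: "b \<in> {0..n} - {k}"
    then obtain x where x: "x \<in> A" "snd x = b" using MiS_D(6)[OF A] by auto
    then have "x \<noteq> ccL k A" using b unfolding ccL_def by auto
    then show "b \<in> snd ` (A - {ccL k A})" using x by force
  qed
  show ?thesis using ch f s unfolding MiS_def by auto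
qed

lemma L_A1:
  assumes A: "A \<in> MiS p n k" and kn: "k < n"
  shows "insert (ccL k A) A \<in> MiS p n k \<and> A - {ccL k A} \<in> MiS p n k \<and>
    ccL k (insert (ccL k A) A) = ccL k A \<and> ccL k (A - {ccL k A}) = ccL k A"
  using L_ins[OF A kn] L_del[OF A kn] unfolding ccL_def by (simp add: astL_ins astL_del)

lemma L_A2:
  assumes U: "U \<in> MiS p n k" and kn: "k < n" and cU: "ccL k U \<in> U" and y: "y \<in> U" "y \<noteq> ccL k U"
    and V: "U - {y} \<in> MiS p n k"
  shows "mL p k (insert (ccL k (U - {y})) (U - {y})) < mL p k U"
proof -
  define V' where "V' = U - {y}"
  have V: "V' \<in> MiS p n k" using V V'_def by simp
  have r: "Suc k \<le> n" "Suc k \<noteq> k" using kn by auto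
  have sub: "{a. (a, Suc k) \<in> V'} \<subseteq> {a. (a, Suc k) \<in> U}" unfolding V'_def by auto
  have aUV: "astL k U \<le> astL k V'"
    unfolding astL_def by (rule Min_antimono[OF sub row_props(2)[OF V r] row_props(1)[OF U r]])
  have aVp: "astL k V' \<le> p" using astL_props[OF V kn] by auto
  have ains: "astL k (insert (ccL k V') V') = astL k V'" unfolding ccL_def by (simp add: astL_ins)
  have fU: "finite U" using MiS_D(1)[OF U] .
  have cardV: "card V' = card U - 1" unfolding V'_def using fU y by (simp add: card_Diff_singleton)
  have cU1: "1 \<le> card U" using fU y by (metis One_nat_def Suc_leI card_gt_0_iff empty_iff)
  have "mL p k (insert (ccL k V') V') < mL p k U"
  proof (cases "astL k V' = astL k U")
    case True
    then have "ccL k V' = ccL k U" unfolding ccL_def by simp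
    then have "ccL k V' \<in> V'" using cU y unfolding V'_def by auto
    then have "insert (ccL k V') V' = V'" by auto
    then show ?thesis unfolding mL_def using True cardV arith1[OF cU1] by simp
  next
    case False
    then have lt: "astL k U < astL k V'" using aUV by simp
    have "card (insert (ccL k V') V') \<le> card U"
      using card_insert_if[of V' "ccL k V'"] fU cardV cU1 unfolding V'_def by auto
    moreover have "p - astL k V' < p - astL k U" using lt aVp by arith
    ultimately show ?thesis unfolding mL_def ains by (rule arith2)
  qed
  then show ?thesis unfolding V'_def .
qed

lemma pp_enum:
  assumes c: "chn (prodpos p q) A"
  shows "enum (prodpos p q) (\<lambda>i. sorted_list_of_set A ! i) (card A - 1)"
    "A = (\<lambda>i. sorted_list_of_set A ! i) ` {0..card A - 1}"
    "1 \<le> card A"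
proof -
  define xs where "xs = sorted_list_of_set A"
  have fin: "finite A" and ne: "A \<noteq> {}" and sub: "A \<subseteq> {0..p} \<times> {0..q}"
    and tot: "\<forall>x\<in>A. \<forall>y\<in>A. (fst x \<le> fst y \<and> snd x \<le> snd y) \<or> (fst y \<le> fst x \<and> snd y \<le> snd x)"
    using c unfolding chn_pp by auto
  have set: "set xs = A" using fin xs_def by simp
  have len: "length xs = card A" using fin xs_def by simp
  have sw: "sorted_wrt (<) xs" unfolding xs_def by (rule strict_sorted_list_of_set)
  have cpos: "card A \<ge> 1" using fin ne by (simp add: Suc_leI card_gt_0_iff)
  then show "1 \<le> card A" .
  have idx: "{0..card A - 1} = {..<length xs}" using cpos len by auto
  have im: "(\<lambda>i. xs ! i) ` {..<length xs} = set xs"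
  proof (rule set_eqI)
    fix x show "x \<in> (\<lambda>i. xs ! i) ` {..<length xs} \<longleftrightarrow> x \<in> set xs"
      unfolding in_set_conv_nth by blast
  qed
  show "A = (\<lambda>i. sorted_list_of_set A ! i) ` {0..card A - 1}"
    unfolding xs_def[symmetric] idx im set ..
  show "enum (prodpos p q) (\<lambda>i. sorted_list_of_set A ! i) (card A - 1)"
    unfolding enum_def xs_def[symmetric]
  proof (rule conjI; intro allI impI)
    fix i assume "i \<le> card A - 1"
    then have "i < length xs" using len cpos by arith
    then have "xs ! i \<in> A" using set nth_mem by blast
    then show "xs ! i \<in> pcar (prodpos p q)" using sub by auto
  next
    fix i j assume ij: "i < j" "j \<le> card A - 1"
    have jl: "j < length xs" using ij len cpos by arith
    have lt: "xs ! i < xs ! j" using sorted_wrt_nth_less[OF sw ij(1) jl] by simp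
    have il: "i < length xs" using jl ij by arith
    have mem: "xs ! i \<in> A" "xs ! j \<in> A" using nth_mem[OF il] nth_mem[OF jl] set by auto
    have "(fst (xs!i) \<le> fst (xs!j) \<and> snd (xs!i) \<le> snd (xs!j)) \<or> (fst (xs!j) \<le> fst (xs!i) \<and> snd (xs!j) \<le> snd (xs!i))"
      using tot mem by blast
    moreover have "\<not> (fst (xs!j) \<le> fst (xs!i) \<and> snd (xs!j) \<le> snd (xs!i))"
    proof
      assume "fst (xs!j) \<le> fst (xs!i) \<and> snd (xs!j) \<le> snd (xs!i)"
      then have "xs ! j \<le> xs ! i" unfolding less_eq_prod_def by simp
      then show False using leD lt by blast
    qed
    ultimately show "ple (prodpos p q) (xs ! i) (xs ! j) \<and> xs ! i \<noteq> xs ! j" using lt by auto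
  qed
qed

lemma horn_from_H:
  assumes H: "\<forall>n k W. 1 \<le> n \<longrightarrow> k \<le> n \<longrightarrow> relstruct n W \<longrightarrow>
           (\<exists>(i, j)\<in>W. i \<noteq> j) \<longrightarrow>
           (k = 0 \<longrightarrow> (0, 1) \<in> W) \<longrightarrow>
           (k = n \<longrightarrow> (n - 1, n) \<in> W) \<longrightarrow>
           horn_extension M n k W"
    and e: "enum (prodpos p q) h n" and kn: "k \<le> n" and i: "Suc i \<le> n" and fi: "fst (h i) = fst (h (Suc i))"
    and c0: "k = 0 \<Longrightarrow> i = 0" and cn: "k = n \<Longrightarrow> Suc i = n"
  shows "horn_extension M n k (Wof (prodpos p q) h n)"
proof -
  define W where "W = Wof (prodpos p q) h n"
  have iW: "(i, Suc i) \<in> W"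
    using enum_le[OF good_pp e, of i "Suc i"] i fi unfolding W_def Wof_def by auto
  have rs: "relstruct n W"
    unfolding relstruct_def
  proof (intro conjI allI impI)
    show "W \<subseteq> {(i, j). i \<le> j \<and> j \<le> n}" unfolding W_def Wof_def by auto
    fix j assume "j \<le> n" then show "(j, j) \<in> W" unfolding W_def Wof_def by auto
  next
    show "trans W" unfolding W_def Wof_def trans_def by auto
  qed
  have "horn_extension M n k W"
    using H[rule_format, OF _ kn rs] iW c0 cn i by fastforce
  then show ?thesis unfolding W_def .
qed

lemma L_A3:
  assumes H: "\<forall>n k W. 1 \<le> n \<longrightarrow> k \<le> n \<longrightarrow> relstruct n W \<longrightarrow>
           (\<exists>(i, j)\<in>W. i \<noteq> j) \<longrightarrow>
           (k = 0 \<longrightarrow> (0, 1) \<in> W) \<longrightarrow>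
           (k = n \<longrightarrow> (n - 1, n) \<in> W) \<longrightarrow>
           horn_extension M n k W"
    and U: "U \<in> MiS p n k" and kn: "k < n" and cU: "ccL k U \<in> U"
  shows "\<exists>h n' k'. enum (prodpos p n) h n' \<and> k' \<le> n' \<and> U = h ` {0..n'} \<and> h k' = ccL k U \<and>
      horn_extension M n' k' (Wof (prodpos p n) h n')"
proof -
  define h where "h = (\<lambda>i. sorted_list_of_set U ! i)"
  define n' where "n' = card U - 1"
  have c: "chn (prodpos p n) U" using MiS_D(7)[OF U] .
  have e: "enum (prodpos p n) h n'" and Uh: "U = h ` {0..n'}"
    using pp_enum[OF c] unfolding h_def n'_def by auto
  obtain k' where k': "k' \<le> n'" "h k' = ccL k U" using cU Uh by auto
  have zU: "(astL k U, Suc k) \<in> U" using astL_props[OF U kn] by auto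
  obtain j where j: "j \<le> n'" "h j = (astL k U, Suc k)" using zU Uh by (metis atLeastAtMost_iff imageE)
  have jne: "j \<noteq> k'" using j k' unfolding ccL_def by auto
  have "\<not> j < k'"
  proof
    assume "j < k'"
    then have "ple (prodpos p n) (h j) (h k') \<and> h j \<noteq> h k'" using e k'(1) unfolding enum_def by blast
    then show False using j k' unfolding ccL_def by auto
  qed
  then have kj: "k' < j" using jne by simp
  have jS: "j = Suc k'"
  proof (rule ccontr)
    assume "j \<noteq> Suc k'"
    then have l: "Suc k' < j" using kj by simp
    have en: "\<And>i j. i < j \<Longrightarrow> j \<le> n' \<Longrightarrow> ple (prodpos p n) (h i) (h j) \<and> h i \<noteq> h j"
      using e unfolding enum_def by blast
    have w1: "ple (prodpos p n) (h k') (h (Suc k'))" "h k' \<noteq> h (Suc k')"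
      using en[of k' "Suc k'"] l j(1) by auto
    have w2: "ple (prodpos p n) (h (Suc k')) (h j)" "h (Suc k') \<noteq> h j"
      using en[of "Suc k'" j] l j(1) by auto
    have "h (Suc k') = h k' \<or> h (Suc k') = h j"
      using w1(1) w2(1) j(2) k'(2) unfolding ccL_def by (auto simp: prod_eq_iff)
    then show False using w1(2) w2(2) by auto
  qed
  have "horn_extension M n' k' (Wof (prodpos p n) h n')"
  proof (rule horn_from_H[OF H e k'(1)])
    show "Suc k' \<le> n'" using jS j by simp
    show "fst (h k') = fst (h (Suc k'))" using jS j k' unfolding ccL_def by simp
    show "k' = 0 \<Longrightarrow> k' = 0" .
    show "k' = n' \<Longrightarrow> Suc k' = n'" using jS j by simp
  qed
  then show ?thesis using e k' Uh by blast
qed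

section \<open>Upper case k = n\<close>

definition astU :: "nat \<Rightarrow> (nat \<times> nat) set \<Rightarrow> nat" where "astU n A = Max {a. (a, n - 1) \<in> A}"
definition ccU :: "nat \<Rightarrow> (nat \<times> nat) set \<Rightarrow> nat \<times> nat" where "ccU n A = (astU n A, n)"
definition mU :: "nat \<Rightarrow> nat \<Rightarrow> (nat \<times> nat) set \<Rightarrow> nat" where "mU p n A = card A * (p + 1) + astU n A"

lemma astU_props:
  assumes A: "A \<in> MiS p n n" and n1: "1 \<le> n"
  shows "(astU n A, n - 1) \<in> A" "\<And>a. (a, n - 1) \<in> A \<Longrightarrow> a \<le> astU n A" "astU n A \<le> p"
proof -
  have r: "n - 1 \<le> n" "n - 1 \<noteq> n" using n1 by auto
  note rp = row_props[OF A r]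
  have m1: "(astU n A, n - 1) \<in> A" unfolding astU_def using Max_in[OF rp(1) rp(2)] by simp
  then show "(astU n A, n - 1) \<in> A" .
  show "\<And>a. (a, n - 1) \<in> A \<Longrightarrow> a \<le> astU n A" unfolding astU_def using Max_ge[OF rp(1)] by simp
  show "astU n A \<le> p" using rp(3) m1 by auto
qed

lemma astU_ins: "1 \<le> n \<Longrightarrow> astU n (insert (x, n) A) = astU n A"
  unfolding astU_def by (rule arg_cong[where f=Max]) auto

lemma astU_del: "1 \<le> n \<Longrightarrow> astU n (A - {(x, n)}) = astU n A"
  unfolding astU_def by (rule arg_cong[where f=Max]) auto

lemma U_comp:
  assumes A: "A \<in> MiS p n n" and n1: "1 \<le> n" and y: "y \<in> A"
  shows "(astU n A \<le> fst y \<and> n \<le> snd y) \<or> (fst y \<le> astU n A \<and> snd y \<le> n)"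
proof -
  have z: "(astU n A, n - 1) \<in> A" and mx: "\<And>a. (a, n - 1) \<in> A \<Longrightarrow> a \<le> astU n A"
    using astU_props[OF A n1] by auto
  have yn: "snd y \<le> n" using MiS_D(3)[OF A y] by simp
  have ch: "(fst y \<le> astU n A \<and> snd y \<le> n - 1) \<or> (astU n A \<le> fst y \<and> n - 1 \<le> snd y)"
    using MiS_D(4)[OF A y z] by simp
  then show ?thesis
  proof
    assume "fst y \<le> astU n A \<and> snd y \<le> n - 1" then show ?thesis by auto
  next
    assume a: "astU n A \<le> fst y \<and> n - 1 \<le> snd y"
    show ?thesis
    proof (cases "snd y = n - 1")
      case True
      then have "(fst y, n - 1) \<in> A" using y by (metis prod.collapse)
      then have "fst y \<le> astU n A" by (rule mx)
      then show ?thesis using True by auto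
    next
      case False
      then have "snd y = n" using a yn by auto
      then show ?thesis using a by auto
    qed
  qed
qed

lemma U_ins:
  assumes A: "A \<in> MiS p n n" and n1: "1 \<le> n"
  shows "insert (ccU n A) A \<in> MiS p n n"
proof -
  have le: "astU n A \<le> p" using astU_props[OF A n1] by auto
  have lc: "\<forall>y\<in>A. (astU n A \<le> fst y \<and> n \<le> snd y) \<or> (fst y \<le> astU n A \<and> snd y \<le> n)"
    using U_comp[OF A n1] by blast
  have ch: "\<forall>x\<in>A. \<forall>y\<in>A. (fst x \<le> fst y \<and> snd x \<le> snd y) \<or> (fst y \<le> fst x \<and> snd y \<le> snd x)"
    using MiS_D(4)[OF A] by blast
  have sub: "A \<subseteq> {0..p} \<times> {0..n}" using MiS_D(3)[OF A] by (auto simp: mem_Times_iff)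
  have "chn (prodpos p n) (insert (ccU n A) A)"
    unfolding chn_pp ccU_def using MiS_D(1)[OF A] le sub lc ch by auto
  then show ?thesis using A unfolding MiS_def by (auto dest: image_mono)
qed

lemma U_del:
  assumes A: "A \<in> MiS p n n" and n1: "1 \<le> n"
  shows "A - {ccU n A} \<in> MiS p n n"
proof -
  have z: "(astU n A, n - 1) \<in> A - {ccU n A}" using astU_props[OF A n1] n1 unfolding ccU_def by auto
  have ch: "chn (prodpos p n) (A - {ccU n A})" using chn_subset[OF MiS_D(7)[OF A], of "A - {ccU n A}"] z by auto
  have f: "{0..p} \<subseteq> fst ` (A - {ccU n A})"
  proof
    fix a assume "a \<in> {0..p}"
    then obtain x where x: "x \<in> A" "fst x = a" using MiS_D(5)[OF A] by auto
    show "a \<in> fst ` (A - {ccU n A})"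
    proof (cases "x = ccU n A")
      case True
      then have "a = astU n A" using x unfolding ccU_def by auto
      then show ?thesis using z by force
    next
      case False
      then show ?thesis using x by force
    qed
  qed
  have s: "{0..n} - {n} \<subseteq> snd ` (A - {ccU n A})"
  proof
    fix b assume b: "b \<in> {0..n} - {n}"
    then obtain x where x: "x \<in> A" "snd x = b" using MiS_D(6)[OF A] by auto
    then have "x \<noteq> ccU n A" using b unfolding ccU_def by auto
    then show "b \<in> snd ` (A - {ccU n A})" using x by force
  qed
  show ?thesis using ch f s unfolding MiS_def by auto
qed

lemma U_A1:
  assumes A: "A \<in> MiS p n n" and n1: "1 \<le> n"
  shows "insert (ccU n A) A \<in> MiS p n n \<and> A - {ccU n A} \<in> MiS p n n \<and>
    ccU n (insert (ccU n A) A) = ccU n A \<and> ccU n (A - {ccU n A}) = ccU n A"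
  using U_ins[OF A n1] U_del[OF A n1] n1 unfolding ccU_def by (simp add: astU_ins astU_del)

lemma U_A2:
  assumes U: "U \<in> MiS p n n" and n1: "1 \<le> n" and cU: "ccU n U \<in> U" and y: "y \<in> U" "y \<noteq> ccU n U"
    and V: "U - {y} \<in> MiS p n n"
  shows "mU p n (insert (ccU n (U - {y})) (U - {y})) < mU p n U"
proof -
  define V' where "V' = U - {y}"
  have V: "V' \<in> MiS p n n" using V V'_def by simp
  have r: "n - 1 \<le> n" "n - 1 \<noteq> n" using n1 by auto
  have sub: "{a. (a, n - 1) \<in> V'} \<subseteq> {a. (a, n - 1) \<in> U}" unfolding V'_def by auto
  have aUV: "astU n V' \<le> astU n U"
    unfolding astU_def by (rule Max_mono[OF sub row_props(2)[OF V r] row_props(1)[OF U r]])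
  have ains: "astU n (insert (ccU n V') V') = astU n V'" unfolding ccU_def using n1 by (simp add: astU_ins)
  have fU: "finite U" using MiS_D(1)[OF U] .
  have cardV: "card V' = card U - 1" unfolding V'_def using fU y by (simp add: card_Diff_singleton)
  have cU1: "1 \<le> card U" using fU y by (metis One_nat_def Suc_leI card_gt_0_iff empty_iff)
  have "mU p n (insert (ccU n V') V') < mU p n U"
  proof (cases "astU n V' = astU n U")
    case True
    then have "ccU n V' = ccU n U" unfolding ccU_def by simp
    then have "ccU n V' \<in> V'" using cU y unfolding V'_def by auto
    then have "insert (ccU n V') V' = V'" by auto
    then show ?thesis unfolding mU_def using True cardV arith1[OF cU1] by simp
  next
    case False
    then have lt: "astU n V' < astU n U" using aUV by simp
    have "card (insert (ccU n V') V') \<le> card U"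
      using card_insert_if[of V' "ccU n V'"] fU cardV cU1 unfolding V'_def by auto
    then show ?thesis unfolding mU_def ains by (rule arith2[OF _ lt])
  qed
  then show ?thesis unfolding V'_def .
qed

lemma U_A3:
  assumes H: "\<forall>n k W. 1 \<le> n \<longrightarrow> k \<le> n \<longrightarrow> relstruct n W \<longrightarrow>
           (\<exists>(i, j)\<in>W. i \<noteq> j) \<longrightarrow>
           (k = 0 \<longrightarrow> (0, 1) \<in> W) \<longrightarrow>
           (k = n \<longrightarrow> (n - 1, n) \<in> W) \<longrightarrow>
           horn_extension M n k W"
    and U: "U \<in> MiS p n n" and n1: "1 \<le> n" and cU: "ccU n U \<in> U"
  shows "\<exists>h n' k'. enum (prodpos p n) h n' \<and> k' \<le> n' \<and> U = h ` {0..n'} \<and> h k' = ccU n U \<and>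
      horn_extension M n' k' (Wof (prodpos p n) h n')"
proof -
  define h where "h = (\<lambda>i. sorted_list_of_set U ! i)"
  define n' where "n' = card U - 1"
  have c: "chn (prodpos p n) U" using MiS_D(7)[OF U] .
  have e: "enum (prodpos p n) h n'" and Uh: "U = h ` {0..n'}"
    using pp_enum[OF c] unfolding h_def n'_def by auto
  obtain k' where k': "k' \<le> n'" "h k' = ccU n U" using cU Uh by auto
  have zU: "(astU n U, n - 1) \<in> U" using astU_props[OF U n1] by auto
  obtain j where j: "j \<le> n'" "h j = (astU n U, n - 1)" using zU Uh by (metis atLeastAtMost_iff imageE)
  have jne: "j \<noteq> k'" using j k' n1 unfolding ccU_def by auto
  have "\<not> k' < j"
  proof
    assume "k' < j"
    then have "ple (prodpos p n) (h k') (h j) \<and> h k' \<noteq> h j" using e j(1) unfolding enum_def by blast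
    then show False using j k' n1 unfolding ccU_def by auto
  qed
  then have kj: "j < k'" using jne by simp
  have jS: "Suc j = k'"
  proof (rule ccontr)
    assume "Suc j \<noteq> k'"
    then have l: "Suc j < k'" using kj by simp
    have en: "\<And>i j. i < j \<Longrightarrow> j \<le> n' \<Longrightarrow> ple (prodpos p n) (h i) (h j) \<and> h i \<noteq> h j"
      using e unfolding enum_def by blast
    have w1: "ple (prodpos p n) (h j) (h (Suc j))" "h j \<noteq> h (Suc j)"
      using en[of j "Suc j"] l k'(1) by auto
    have w2: "ple (prodpos p n) (h (Suc j)) (h k')" "h (Suc j) \<noteq> h k'"
      using en[of "Suc j" k'] l k'(1) by auto
    have "h (Suc j) = h j \<or> h (Suc j) = h k'"
      using w1(1) w2(1) j(2) k'(2) n1 unfolding ccU_def by (auto simp: prod_eq_iff)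
    then show False using w1(2) w2(2) by auto
  qed
  have "horn_extension M n' k' (Wof (prodpos p n) h n')"
  proof (rule horn_from_H[OF H e k'(1), of j])
    show "Suc j \<le> n'" using jS k' by simp
    show "fst (h j) = fst (h (Suc j))" using jS j k' unfolding ccU_def by simp
    show "k' = 0 \<Longrightarrow> j = 0" using jS by simp
    show "k' = n' \<Longrightarrow> Suc j = n'" using jS by simp
  qed
  then show ?thesis using e k' Uh by blast
qed




lemma ext_pp:
  assumes H: "\<forall>n k W. 1 \<le> n \<longrightarrow> k \<le> n \<longrightarrow> relstruct n W \<longrightarrow>
           (\<exists>(i, j)\<in>W. i \<noteq> j) \<longrightarrow>
           (k = 0 \<longrightarrow> (0, 1) \<in> W) \<longrightarrow>
           (k = n \<longrightarrow> (n - 1, n) \<in> W) \<longrightarrow>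
           horn_extension M n k W"
    and n1: "1 \<le> n" and kn: "k \<le> n"
    and G: "relfun (sxi (prodpos p n) (SL (prodpos p n) (Collect (chn (prodpos p n)) - MiS p n k))) M G"
  shows "\<exists>F. relfun (xi (prodpos p n)) M F \<and>
    (\<forall>As\<in>SL (prodpos p n) (Collect (chn (prodpos p n)) - MiS p n k). fst F As = fst G As \<and> (\<forall>Bs. snd F Bs As = snd G Bs As))"
proof (cases "k < n")
  case True
  show ?thesis
  proof (rule extend_all[OF good_pp finite_pp MiS_chn _ _ _ MiS_up G, where cc="ccL k" and m="mL p k"])
    show "\<And>T. T \<in> MiS p n k \<Longrightarrow> insert (ccL k T) T \<in> MiS p n k \<and> T - {ccL k T} \<in> MiS p n k \<and>
      ccL k (insert (ccL k T) T) = ccL k T \<and> ccL k (T - {ccL k T}) = ccL k T"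
      using L_A1 True by blast
    show "\<And>U y. U \<in> MiS p n k \<Longrightarrow> ccL k U \<in> U \<Longrightarrow> y \<in> U \<Longrightarrow> y \<noteq> ccL k U \<Longrightarrow> U - {y} \<in> MiS p n k \<Longrightarrow>
      mL p k (insert (ccL k (U - {y})) (U - {y})) < mL p k U"
      using L_A2 True by blast
    show "\<And>U. U \<in> MiS p n k \<Longrightarrow> ccL k U \<in> U \<Longrightarrow> \<exists>h n' k'. enum (prodpos p n) h n' \<and> k' \<le> n' \<and>
      U = h ` {0..n'} \<and> h k' = ccL k U \<and> horn_extension M n' k' (Wof (prodpos p n) h n')"
      using L_A3[OF H] True by blast
  qed
next
  case False
  then have kn': "k = n" using kn by simp
  show ?thesis
    unfolding kn'
  proof (rule extend_all[OF good_pp finite_pp MiS_chn _ _ _ MiS_up G[unfolded kn'], where cc="ccU n" and m="mU p n"])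
    show "\<And>T. T \<in> MiS p n n \<Longrightarrow> insert (ccU n T) T \<in> MiS p n n \<and> T - {ccU n T} \<in> MiS p n n \<and>
      ccU n (insert (ccU n T) T) = ccU n T \<and> ccU n (T - {ccU n T}) = ccU n T"
      using U_A1 n1 by blast
    show "\<And>U y. U \<in> MiS p n n \<Longrightarrow> ccU n U \<in> U \<Longrightarrow> y \<in> U \<Longrightarrow> y \<noteq> ccU n U \<Longrightarrow> U - {y} \<in> MiS p n n \<Longrightarrow>
      mU p n (insert (ccU n (U - {y})) (U - {y})) < mU p n U"
      using U_A2 n1 by blast
    show "\<And>U. U \<in> MiS p n n \<Longrightarrow> ccU n U \<in> U \<Longrightarrow> \<exists>h n' k'. enum (prodpos p n) h n' \<and> k' \<le> n' \<and>
      U = h ` {0..n'} \<and> h k' = ccU n U \<and> horn_extension M n' k' (Wof (prodpos p n) h n')"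
      using U_A3[OF H] n1 by blast
  qed
qed




lemma delta_le_iff: "delta i a \<le> delta i b \<longleftrightarrow> a \<le> b" by (auto simp: delta_def)
lemma delta_inj_iff: "delta i a = delta i b \<longleftrightarrow> a = b" by (auto simp: delta_def)
lemma delta_ne: "delta i a \<noteq> i" by (simp add: delta_def)
lemma delta_le_Suc: "delta i a \<le> Suc a" by (simp add: delta_def)
lemma delta_surj: "b \<le> m \<Longrightarrow> b \<noteq> i \<Longrightarrow> i \<le> m \<Longrightarrow> \<exists>a\<le>m - 1. delta i a = b"
proof (cases "b < i")
  case True
  assume "b \<le> m" "b \<noteq> i" "i \<le> m"
  then show ?thesis using True by (intro exI[of _ b]) (auto simp: delta_def)
next
  case False
  assume "b \<le> m" "b \<noteq> i" "i \<le> m"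
  then show ?thesis using False by (intro exI[of _ "b - 1"]) (auto simp: delta_def)
qed
lemma delta_comm: "i < j \<Longrightarrow> delta j (delta i b) = delta i (delta (j - 1) b)"
  by (auto simp: delta_def)
lemma delta_fix: "i < j \<Longrightarrow> delta j i = i" by (simp add: delta_def)

definition vmp :: "nat \<Rightarrow> nat \<times> nat \<Rightarrow> nat \<times> nat" where "vmp i = (\<lambda>(a, b). (a, delta i b))"
definition hmp :: "nat \<Rightarrow> nat \<times> nat \<Rightarrow> nat \<times> nat" where "hmp i = (\<lambda>(a, b). (delta i a, b))"

lemma vmp_simp[simp]: "vmp i z = (fst z, delta i (snd z))" unfolding vmp_def by (simp add: case_prod_beta)
lemma hmp_simp[simp]: "hmp i z = (delta i (fst z), snd z)" unfolding hmp_def by (simp add: case_prod_beta)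

lemma vface_vmp: "vface p q i F = pullback (prodpos p (q - 1)) (vmp i) F"
  unfolding vface_def vmp_def ..
lemma hface_hmp: "hface p q i F = pullback (prodpos (p - 1) q) (hmp i) F"
  unfolding hface_def hmp_def ..

lemma iemb_vmp: assumes q: "1 \<le> q" shows "iemb (vmp i) (prodpos p (q - 1)) (prodpos p q)"
  unfolding iemb_def emb_def
proof (intro conjI ballI impI)
  fix z assume "z \<in> pcar (prodpos p (q - 1))"
  then show "vmp i z \<in> pcar (prodpos p q)" using delta_le_Suc[of i "snd z"] q by (auto simp: mem_Times_iff)
next
  show "inj_on (vmp i) (pcar (prodpos p (q - 1)))"
    by (rule inj_onI) (auto simp: prod_eq_iff delta_inj_iff)
qed (auto simp: delta_le_iff)

lemma iemb_hmp: assumes p: "1 \<le> p" shows "iemb (hmp i) (prodpos (p - 1) q) (prodpos p q)"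
  unfolding iemb_def emb_def
proof (intro conjI ballI impI)
  fix z assume "z \<in> pcar (prodpos (p - 1) q)"
  then show "hmp i z \<in> pcar (prodpos p q)" using delta_le_Suc[of i "fst z"] p by (auto simp: mem_Times_iff)
next
  show "inj_on (hmp i) (pcar (prodpos (p - 1) q))"
    by (rule inj_onI) (auto simp: prod_eq_iff delta_inj_iff)
qed (auto simp: delta_le_iff delta_inj_iff)

lemma vmp_im:
  assumes z: "z \<in> vmp i ` pcar (prodpos p (q - 1))" and q: "1 \<le> q"
  shows "z \<in> pcar (prodpos p q) \<and> snd z \<noteq> i"
proof -
  obtain w where w: "w \<in> pcar (prodpos p (q - 1))" "z = vmp i w" using z by blast
  have "delta i (snd w) \<le> q" using delta_le_Suc[of i "snd w"] w(1) q by (auto simp: mem_Times_iff)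
  then show ?thesis using w delta_ne[of i "snd w"] by (auto simp: mem_Times_iff)
qed

lemma hmp_im:
  assumes z: "z \<in> hmp i ` pcar (prodpos (p - 1) q)" and p: "1 \<le> p"
  shows "z \<in> pcar (prodpos p q) \<and> fst z \<noteq> i"
proof -
  obtain w where w: "w \<in> pcar (prodpos (p - 1) q)" "z = hmp i w" using z by blast
  have "delta i (fst w) \<le> p" using delta_le_Suc[of i "fst w"] w(1) p by (auto simp: mem_Times_iff)
  then show ?thesis using w delta_ne[of i "fst w"] by (auto simp: mem_Times_iff)
qed

lemma vmp_im_rev:
  assumes "z \<in> pcar (prodpos p q)" "snd z \<noteq> i" "i \<le> q"
  shows "z \<in> vmp i ` pcar (prodpos p (q - 1))"
proof -
  obtain b where b: "b \<le> q - 1" "delta i b = snd z" using delta_surj[of "snd z" q i] assms by auto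
  have "(fst z, b) \<in> pcar (prodpos p (q - 1))" using assms(1) b by auto
  moreover have "z = vmp i (fst z, b)" using b by simp
  ultimately show ?thesis by blast
qed

lemma hmp_im_rev:
  assumes "z \<in> pcar (prodpos p q)" "fst z \<noteq> i" "i \<le> p"
  shows "z \<in> hmp i ` pcar (prodpos (p - 1) q)"
proof -
  obtain a where a: "a \<le> p - 1" "delta i a = fst z" using delta_surj[of "fst z" p i] assms by auto
  have "(a, snd z) \<in> pcar (prodpos (p - 1) q)" using assms(1) a by auto
  moreover have "z = hmp i (a, snd z)" using a by simp
  ultimately show ?thesis by blast
qed

lemma agree_gen:
  assumes gP: "good P" and gP1: "good P1" and gP2: "good P2" and gQ: "good Q"
    and g1: "iemb g1 P1 P" and g2: "iemb g2 P2 P" and e1: "iemb e1 Q P1" and e2: "iemb e2 Q P2"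
    and comm: "\<And>q. q \<in> pcar Q \<Longrightarrow> g1 (e1 q) = g2 (e2 q)"
    and cov: "\<And>z. z \<in> g1 ` pcar P1 \<Longrightarrow> z \<in> g2 ` pcar P2 \<Longrightarrow> \<exists>q\<in>pcar Q. z = g1 (e1 q)"
    and pbe: "pullback Q e1 d1 = pullback Q e2 d2"
    and C1: "C1 = {As \<in> xi_car P. \<forall>A\<in>set As. A \<subseteq> g1 ` pcar P1}"
    and C2: "C2 = {As \<in> xi_car P. \<forall>A\<in>set As. A \<subseteq> g2 ` pcar P2}"
  shows "agree P C1 (pb C1 (inv_into (pcar P1) g1) d1) C2 (pb C2 (inv_into (pcar P2) g2) d2)"
proof -
  define gi1 where "gi1 = inv_into (pcar P1) g1"
  define gi2 where "gi2 = inv_into (pcar P2) g2"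
  define ei1 where "ei1 = inv_into (pcar Q) e1"
  define Phi where "Phi As = ximap ei1 (ximap gi1 As)" for As
  have im1: "g1 ` pcar P1 \<subseteq> pcar P" using g1 unfolding iemb_def emb_def by auto
  have ime1: "e1 ` pcar Q \<subseteq> pcar P1" using e1 unfolding iemb_def emb_def by auto
  have egi1: "emb gi1 (P\<lparr>pcar := g1 ` pcar P1\<rparr>) P1" unfolding gi1_def by (rule iemb_inv[OF g1])
  have eei1: "emb ei1 (P1\<lparr>pcar := e1 ` pcar Q\<rparr>) Q" unfolding ei1_def by (rule iemb_inv[OF e1])
  have inj1: "inj_on g1 (pcar P1)" using g1 unfolding iemb_def emb_def by blast
  have key: "Phi As \<in> xi_car Q \<and> ximap e1 (Phi As) = ximap gi1 As \<and>
        ximap gi2 As = ximap e2 (Phi As)" if As: "As \<in> C1 \<inter> C2" for As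
  proof -
    have As1: "As \<in> xi_car P" "\<forall>A\<in>set As. A \<subseteq> g1 ` pcar P1" "\<forall>A\<in>set As. A \<subseteq> g2 ` pcar P2"
      using As C1 C2 by auto
    have AsR: "As \<in> xi_car (P\<lparr>pcar := g1 ` pcar P1\<rparr>)" using As1 xi_car_restrict[OF im1] by auto
    define Bs where "Bs = ximap gi1 As"
    have Bs: "Bs \<in> xi_car P1" unfolding Bs_def by (rule ximap_car[OF egi1 AsR])
    have gB: "ximap g1 Bs = As" unfolding Bs_def gi1_def by (rule iemb_roundtrip2[OF As1(1) As1(2)])
    have Bsub: "\<forall>B\<in>set Bs. B \<subseteq> e1 ` pcar Q"
    proof (intro ballI subsetI)
      fix B z assume B: "B \<in> set Bs" and z: "z \<in> B"
      have zc: "z \<in> pcar P1" using xi_car_sub_car[OF Bs B] z by auto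
      have "g1 ` B \<in> set (ximap g1 Bs)" using B unfolding set_ximap by blast
      then have "g1 ` B \<in> set As" using gB by simp
      moreover have gz: "g1 z \<in> g1 ` B" using z by blast
      ultimately have w: "g1 z \<in> g1 ` pcar P1" "g1 z \<in> g2 ` pcar P2" using As1 by blast+
      obtain q where q: "q \<in> pcar Q" "g1 z = g1 (e1 q)" using cov[OF w] by blast
      have "e1 q \<in> pcar P1" using q(1) ime1 by auto
      then have "z = e1 q" using inj1 zc q(2) unfolding inj_on_def by blast
      then show "z \<in> e1 ` pcar Q" using q(1) by auto
    qed
    have BsR: "Bs \<in> xi_car (P1\<lparr>pcar := e1 ` pcar Q\<rparr>)" using Bs Bsub xi_car_restrict[OF ime1] by auto
    have Cs: "Phi As \<in> xi_car Q" unfolding Phi_def Bs_def[symmetric] by (rule ximap_car[OF eei1 BsR])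
    have eC: "ximap e1 (Phi As) = Bs" unfolding Phi_def Bs_def[symmetric] ei1_def
      by (rule iemb_roundtrip2[OF Bs Bsub])
    have "ximap g1 (ximap e1 (Phi As)) = ximap g2 (ximap e2 (Phi As))"
      unfolding ximap_comp
    proof (rule ximap_cong)
      fix A z assume "A \<in> set (Phi As)" "z \<in> A"
      then have "z \<in> pcar Q" using xi_car_sub_car[OF Cs] by auto
      then show "(g1 \<circ> e1) z = (g2 \<circ> e2) z" using comm by simp
    qed
    then have AsE: "As = ximap g2 (ximap e2 (Phi As))" using eC gB by simp
    have "ximap gi2 As = ximap e2 (Phi As)"
      using iemb_roundtrip1[OF g2 ximap_car[OF iemb_emb[OF e2] Cs]] AsE unfolding gi2_def by simp
    then show ?thesis using Cs eC unfolding Bs_def by simp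
  qed
  have mono: "set (Phi Bs) \<subseteq> set (Phi As)" if "set Bs \<subseteq> set As" for As Bs
    using that unfolding Phi_def set_ximap by auto
  show ?thesis
    unfolding agree_def gi1_def[symmetric] gi2_def[symmetric]
  proof (intro ballI conjI impI)
    fix As assume As: "As \<in> C1 \<inter> C2"
    note kA = key[OF As]
    have AsC: "As \<in> C1" "As \<in> C2" using As by auto
    have pf: "fst (pullback Q e1 d1) (Phi As) = fst (pullback Q e2 d2) (Phi As)" using pbe by simp
    then have "fst d1 (ximap gi1 As) = fst d2 (ximap gi2 As)"
      using kA unfolding pullback_pb by (simp add: pb_simps)
    then show "fst (pb C1 gi1 d1) As = fst (pb C2 gi2 d2) As" using AsC by (simp add: pb_simps)
    fix Bs assume Bs: "Bs \<in> xi_car P" "set Bs \<subseteq> set As"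
    have BsC: "Bs \<in> C1" "Bs \<in> C2" using Bs AsC unfolding C1 C2 by auto
    note kB = key[of Bs]
    have kB': "Phi Bs \<in> xi_car Q \<and> ximap e1 (Phi Bs) = ximap gi1 Bs \<and> ximap gi2 Bs = ximap e2 (Phi Bs)"
      using kB BsC by blast
    have ps: "snd (pullback Q e1 d1) (Phi Bs) (Phi As) = snd (pullback Q e2 d2) (Phi Bs) (Phi As)"
      using pbe by simp
    then have "snd d1 (ximap gi1 Bs) (ximap gi1 As) = snd d2 (ximap gi2 Bs) (ximap gi2 As)"
      using kA kB' mono[OF Bs(2)] unfolding pullback_pb by (simp add: pb_simps)
    then show "snd (pb C1 gi1 d1) Bs As = snd (pb C2 gi2 d2) Bs As"
      using AsC BsC Bs(2) by (simp add: pb_simps)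
  qed
qed

lemma agree_disj:
  assumes disj: "\<And>z. z \<in> X1 \<Longrightarrow> z \<in> X2 \<Longrightarrow> False"
    and C1: "C1 = {As \<in> xi_car P. \<forall>A\<in>set As. A \<subseteq> X1}"
    and C2: "C2 = {As \<in> xi_car P. \<forall>A\<in>set As. A \<subseteq> X2}"
  shows "agree P C1 G1 C2 G2"
proof -
  have "C1 \<inter> C2 = {}"
  proof (rule ccontr)
    assume "C1 \<inter> C2 \<noteq> {}"
    then obtain As where As: "As \<in> C1" "As \<in> C2" by blast
    have h: "hd As \<in> set As" "hd As \<noteq> {}" using As C1 unfolding xi_car_iff chn_def by auto
    then obtain z where "z \<in> hd As" by blast
    then show False using As h C1 C2 disj by blast
  qed
  then show ?thesis unfolding agree_def by auto
qed

lemma face_recover: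
  assumes ie: "iemb g D P" and gD: "good D" and gP: "good P" and d: "relfun (xi D) M d"
    and C: "C = {As \<in> xi_car P. \<forall>A\<in>set As. A \<subseteq> g ` pcar D}"
    and FG: "\<forall>As\<in>C. fst F As = fst (pb C (inv_into (pcar D) g) d) As \<and>
        (\<forall>Bs. snd F Bs As = snd (pb C (inv_into (pcar D) g) d) Bs As)"
  shows "pullback D g F = d"
proof -
  define gi where "gi = inv_into (pcar D) g"
  have e: "emb g D P" using ie by (rule iemb_emb)
  have mapC: "ximap g Cs \<in> C" if "Cs \<in> xi_car D" for Cs
  proof -
    have "\<forall>A\<in>set (ximap g Cs). A \<subseteq> g ` pcar D" using xi_car_sub_car[OF that] unfolding set_ximap by auto
    then show ?thesis using ximap_car[OF e that] unfolding C by auto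
  qed
  have rt: "ximap gi (ximap g Cs) = Cs" if "Cs \<in> xi_car D" for Cs
    unfolding gi_def by (rule iemb_roundtrip1[OF ie that])
  have cx: "pcar (xi D) = xi_car D" "ple (xi D) Bs Cs = (set Bs \<subseteq> set Cs)" for Bs Cs
    unfolding xi_def by simp_all
  note dD = relfunD[OF d, unfolded cx]
  show ?thesis
  proof (rule prod_eqI)
    show "fst (pullback D g F) = fst d"
    proof (rule ext)
      fix Cs
      show "fst (pullback D g F) Cs = fst d Cs"
      proof (cases "Cs \<in> xi_car D")
        case True
        have "fst F (ximap g Cs) = fst d (ximap gi (ximap g Cs))"
          using FG mapC[OF True] unfolding gi_def[symmetric] by (simp add: pb_simps)
        then show ?thesis using True rt[OF True] unfolding pullback_pb by (simp add: pb_simps)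
      next
        case False
        then show ?thesis using dD(6) unfolding pullback_pb by (simp add: pb_simps)
      qed
    qed
    show "snd (pullback D g F) = snd d"
    proof (rule ext, rule ext)
      fix Bs Cs
      show "snd (pullback D g F) Bs Cs = snd d Bs Cs"
      proof (cases "Bs \<in> xi_car D \<and> Cs \<in> xi_car D \<and> set Bs \<subseteq> set Cs")
        case True
        have sub: "set (ximap g Bs) \<subseteq> set (ximap g Cs)" using True unfolding set_ximap by auto
        have "snd F (ximap g Bs) (ximap g Cs) = snd d (ximap gi (ximap g Bs)) (ximap gi (ximap g Cs))"
          using FG mapC True sub unfolding gi_def[symmetric] by (simp add: pb_simps)
        then show ?thesis using True rt unfolding pullback_pb by (simp add: pb_simps)
      next
        case False
        then show ?thesis using dD(7)[of Bs Cs] unfolding pullback_pb by (auto simp: pb_simps)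
      qed
    qed
  qed
qed




lemma core:
  assumes H: "\<forall>n k W. 1 \<le> n \<longrightarrow> k \<le> n \<longrightarrow> relstruct n W \<longrightarrow>
           (\<exists>(i, j)\<in>W. i \<noteq> j) \<longrightarrow>
           (k = 0 \<longrightarrow> (0, 1) \<in> W) \<longrightarrow>
           (k = n \<longrightarrow> (n - 1, n) \<in> W) \<longrightarrow>
           horn_extension M n k W"
    and n1: "1 \<le> n" and kn: "k \<le> n"
    and hx: "\<And>i. i \<le> n \<Longrightarrow> i \<noteq> k \<Longrightarrow> relfun (xi (prodpos p (n - 1))) M (x i)"
    and hy: "\<And>j. 1 \<le> p \<Longrightarrow> j \<le> p \<Longrightarrow> relfun (xi (prodpos (p - 1) n)) M (y j)"
    and cxx: "\<And>i j. 2 \<le> n \<Longrightarrow> i < j \<Longrightarrow> j \<le> n \<Longrightarrow> i \<noteq> k \<Longrightarrow> j \<noteq> k \<Longrightarrow>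
        vface p (n - 1) i (x j) = vface p (n - 1) (j - 1) (x i)"
    and cyy: "\<And>i j. 2 \<le> p \<Longrightarrow> i < j \<Longrightarrow> j \<le> p \<Longrightarrow> hface (p - 1) n i (y j) = hface (p - 1) n (j - 1) (y i)"
    and cxy: "\<And>i j. 1 \<le> p \<Longrightarrow> i \<le> n \<Longrightarrow> i \<noteq> k \<Longrightarrow> j \<le> p \<Longrightarrow> hface p (n - 1) j (x i) = vface (p - 1) n i (y j)"
  shows "\<exists>z. relfun (xi (prodpos p n)) M z \<and> (\<forall>i\<le>n. i \<noteq> k \<longrightarrow> vface p n i z = x i) \<and>
     (1 \<le> p \<longrightarrow> (\<forall>j\<le>p. hface p n j z = y j))"
proof -
  define P where "P = prodpos p n"
  define I where "I = {(True, i) | i. i \<le> n \<and> i \<noteq> k} \<union> {(False, j) | j. 1 \<le> p \<and> j \<le> p}"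
  define dom where "dom c = (if fst c then prodpos p (n - 1) else prodpos (p - 1) n)" for c :: "bool \<times> nat"
  define gm where "gm c = (if fst c then vmp (snd c) else hmp (snd c))" for c :: "bool \<times> nat"
  define dd where "dd c = (if fst c then x (snd c) else y (snd c))" for c :: "bool \<times> nat"
  define Cc where "Cc c = {As \<in> xi_car P. \<forall>A\<in>set As. A \<subseteq> gm c ` pcar (dom c)}" for c
  define GG where "GG c = pb (Cc c) (inv_into (pcar (dom c)) (gm c)) (dd c)" for c
  have domT: "dom (True, i) = prodpos p (n - 1)" and domF: "dom (False, i) = prodpos (p - 1) n"
    and gmT: "gm (True, i) = vmp i" and gmF: "gm (False, i) = hmp i"
    and ddT: "dd (True, i) = x i" and ddF: "dd (False, i) = y i" for i
    unfolding dom_def gm_def dd_def by simp_all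
  have Iv: "c \<in> I \<longleftrightarrow> (fst c \<and> snd c \<le> n \<and> snd c \<noteq> k) \<or> (\<not> fst c \<and> 1 \<le> p \<and> snd c \<le> p)" for c
    by (cases c) (auto simp: I_def)
  have ie: "iemb (gm c) (dom c) P" if "c \<in> I" for c
  proof (cases "fst c")
    case True then show ?thesis unfolding gm_def dom_def P_def using iemb_vmp[OF n1] by simp
  next
    case False then have "1 \<le> p" using that Iv by auto
    then show ?thesis using False unfolding gm_def dom_def P_def using iemb_hmp by simp
  qed
  have gd: "good (dom c)" for c unfolding dom_def by (simp add: good_pp)
  have gP: "good P" unfolding P_def by (rule good_pp)
  have rd: "relfun (xi (dom c)) M (dd c)" if "c \<in> I" for c
    using that hx hy Iv unfolding dom_def dd_def by (cases "fst c") auto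
  have imsub: "gm c ` pcar (dom c) \<subseteq> pcar P" if "c \<in> I" for c
    using ie[OF that] unfolding iemb_def emb_def by auto
  have CcR: "Cc c = xi_car (P\<lparr>pcar := gm c ` pcar (dom c)\<rparr>)" if "c \<in> I" for c
    unfolding Cc_def using xi_car_restrict[OF imsub[OF that]] by simp
  have GGr: "relfun (sxi P (Cc c)) M (GG c)" if c: "c \<in> I" for c
  proof -
    have e: "emb (inv_into (pcar (dom c)) (gm c)) (P\<lparr>pcar := gm c ` pcar (dom c)\<rparr>) (dom c)"
      by (rule iemb_inv[OF ie[OF c]])
    have "relfun (sxi (P\<lparr>pcar := gm c ` pcar (dom c)\<rparr>) (xi_car (P\<lparr>pcar := gm c ` pcar (dom c)\<rparr>))) M
        (pb (xi_car (P\<lparr>pcar := gm c ` pcar (dom c)\<rparr>)) (inv_into (pcar (dom c)) (gm c)) (dd c))"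
      by (rule pb_relfun[OF good_restrict[OF gP imsub[OF c]] gd e subset_refl ximap_car[OF e] subset_refl
          rd[OF c, unfolded xi_sxi]])
    then show ?thesis unfolding GG_def CcR[OF c, symmetric] by simp
  qed
  have dcs: "\<forall>c\<in>I. dcl P (Cc c)" unfolding dcl_def Cc_def by auto
  have GGs: "\<forall>c\<in>I. relfun (sxi P (Cc c)) M (GG c)" using GGr by blast
  have agTT: "agree P (Cc (True, j)) (GG (True, j)) (Cc (True, i)) (GG (True, i))"
    if ij: "i < j" "j \<le> n" "i \<noteq> k" "j \<noteq> k" for i j
  proof -
    have n2: "2 \<le> n" using ij kn by arith
    have n11: "1 \<le> n - 1" using n2 by arith
    show ?thesis
      unfolding GG_def Cc_def domT gmT ddT
    proof (rule agree_gen[where Q="prodpos p (n - 1 - 1)" and ?e1.0="vmp i" and ?e2.0="vmp (j - 1)"])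
      show "good P" "good (prodpos p (n - 1))" "good (prodpos p (n - 1))" "good (prodpos p (n - 1 - 1))"
        using gP good_pp by auto
      show "iemb (vmp j) (prodpos p (n - 1)) P" "iemb (vmp i) (prodpos p (n - 1)) P"
        unfolding P_def by (rule iemb_vmp[OF n1])+
      show "iemb (vmp i) (prodpos p (n - 1 - 1)) (prodpos p (n - 1))"
        "iemb (vmp (j - 1)) (prodpos p (n - 1 - 1)) (prodpos p (n - 1))"
        by (rule iemb_vmp[OF n11])+
      show "\<And>q. q \<in> pcar (prodpos p (n - 1 - 1)) \<Longrightarrow> vmp j (vmp i q) = vmp i (vmp (j - 1) q)"
        using delta_comm[OF ij(1)] by simp
      show "\<exists>q\<in>pcar (prodpos p (n - 1 - 1)). z = vmp j (vmp i q)"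
        if "z \<in> vmp j ` pcar (prodpos p (n - 1))" "z \<in> vmp i ` pcar (prodpos p (n - 1))" for z
      proof -
        have z: "z \<in> pcar (prodpos p n)" "snd z \<noteq> j" "snd z \<noteq> i"
          using vmp_im[OF that(1) n1] vmp_im[OF that(2) n1] by auto
        obtain b where b: "b \<le> n - 1" "delta j b = snd z" using delta_surj[of "snd z" n j] z ij by auto
        have bi: "b \<noteq> i" using b z delta_fix[OF ij(1)] by auto
        have in1: "i \<le> n - 1" using ij by arith
        obtain c where c: "c \<le> n - 1 - 1" "delta i c = b" using delta_surj[of b "n - 1" i] b(1) bi in1 by blast
        have "(fst z, c) \<in> pcar (prodpos p (n - 1 - 1))" using z c by auto
        moreover have "z = vmp j (vmp i (fst z, c))" using b c by simp
        ultimately show ?thesis by blast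
      qed
      show "pullback (prodpos p (n - 1 - 1)) (vmp i) (x j) = pullback (prodpos p (n - 1 - 1)) (vmp (j - 1)) (x i)"
        using cxx[OF n2 ij] unfolding vface_vmp .
    qed (simp_all add: P_def)
  qed
  have agFF: "agree P (Cc (False, j)) (GG (False, j)) (Cc (False, i)) (GG (False, i))"
    if ij: "i < j" "j \<le> p" for i j
  proof (cases "2 \<le> p")
    case True
    note p2 = True
    have p1: "1 \<le> p" using p2 by simp
    have p11: "1 \<le> p - 1" using p2 by arith
    show ?thesis
      unfolding GG_def Cc_def domF gmF ddF
    proof (rule agree_gen[where Q="prodpos (p - 1 - 1) n" and ?e1.0="hmp i" and ?e2.0="hmp (j - 1)"])
      show "good P" "good (prodpos (p - 1) n)" "good (prodpos (p - 1) n)" "good (prodpos (p - 1 - 1) n)"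
        using gP good_pp by auto
      show "iemb (hmp j) (prodpos (p - 1) n) P" "iemb (hmp i) (prodpos (p - 1) n) P"
        unfolding P_def by (rule iemb_hmp[OF p1])+
      show "iemb (hmp i) (prodpos (p - 1 - 1) n) (prodpos (p - 1) n)"
        "iemb (hmp (j - 1)) (prodpos (p - 1 - 1) n) (prodpos (p - 1) n)"
        by (rule iemb_hmp[OF p11])+
      show "\<And>q. q \<in> pcar (prodpos (p - 1 - 1) n) \<Longrightarrow> hmp j (hmp i q) = hmp i (hmp (j - 1) q)"
        using delta_comm[OF ij(1)] by simp
      show "\<exists>q\<in>pcar (prodpos (p - 1 - 1) n). z = hmp j (hmp i q)"
        if "z \<in> hmp j ` pcar (prodpos (p - 1) n)" "z \<in> hmp i ` pcar (prodpos (p - 1) n)" for z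
      proof -
        have z: "z \<in> pcar (prodpos p n)" "fst z \<noteq> j" "fst z \<noteq> i"
          using hmp_im[OF that(1) p1] hmp_im[OF that(2) p1] by auto
        obtain b where b: "b \<le> p - 1" "delta j b = fst z" using delta_surj[of "fst z" p j] z ij by auto
        have bi: "b \<noteq> i" using b z delta_fix[OF ij(1)] by auto
        have ip1: "i \<le> p - 1" using ij by arith
        obtain c where c: "c \<le> p - 1 - 1" "delta i c = b" using delta_surj[of b "p - 1" i] b(1) bi ip1 by blast
        have "(c, snd z) \<in> pcar (prodpos (p - 1 - 1) n)" using z c by auto
        moreover have "z = hmp j (hmp i (c, snd z))" using b c by simp
        ultimately show ?thesis by blast
      qed
      show "pullback (prodpos (p - 1 - 1) n) (hmp i) (y j) = pullback (prodpos (p - 1 - 1) n) (hmp (j - 1)) (y i)"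
        using cyy[OF p2 ij] unfolding hface_hmp .
    qed (simp_all add: P_def)
  next
    case False
    then have ij01: "i = 0" "j = 1" "p = 1" using ij by auto
    show ?thesis
      unfolding Cc_def
    proof (rule agree_disj[where ?X1.0="gm (False, j) ` pcar (dom (False, j))" and ?X2.0="gm (False, i) ` pcar (dom (False, i))"])
      fix z assume "z \<in> gm (False, j) ` pcar (dom (False, j))" "z \<in> gm (False, i) ` pcar (dom (False, i))"
      then have "z \<in> pcar (prodpos p n)" "fst z \<noteq> j" "fst z \<noteq> i"
        using hmp_im[of z j "p" n] hmp_im[of z i p n] ij01 unfolding gmF domF by auto
      then show False using ij01 by auto
    qed simp_all
  qed
  have agTF: "agree P (Cc (True, i)) (GG (True, i)) (Cc (False, j)) (GG (False, j))"
    if ij: "i \<le> n" "i \<noteq> k" "j \<le> p" "1 \<le> p" for i j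
  proof -
    show ?thesis
      unfolding GG_def Cc_def domT gmT ddT domF gmF ddF
    proof (rule agree_gen[where Q="prodpos (p - 1) (n - 1)" and ?e1.0="hmp j" and ?e2.0="vmp i"])
      show "good P" "good (prodpos p (n - 1))" "good (prodpos (p - 1) n)" "good (prodpos (p - 1) (n - 1))"
        using gP good_pp by auto
      show "iemb (vmp i) (prodpos p (n - 1)) P" unfolding P_def by (rule iemb_vmp[OF n1])
      show "iemb (hmp j) (prodpos (p - 1) n) P" unfolding P_def by (rule iemb_hmp[OF ij(4)])
      show "iemb (hmp j) (prodpos (p - 1) (n - 1)) (prodpos p (n - 1))" by (rule iemb_hmp[OF ij(4)])
      show "iemb (vmp i) (prodpos (p - 1) (n - 1)) (prodpos (p - 1) n)" by (rule iemb_vmp[OF n1])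
      show "\<And>q. q \<in> pcar (prodpos (p - 1) (n - 1)) \<Longrightarrow> vmp i (hmp j q) = hmp j (vmp i q)"
        by simp
      show "\<exists>q\<in>pcar (prodpos (p - 1) (n - 1)). z = vmp i (hmp j q)"
        if "z \<in> vmp i ` pcar (prodpos p (n - 1))" "z \<in> hmp j ` pcar (prodpos (p - 1) n)" for z
      proof -
        have z: "z \<in> pcar (prodpos p n)" "snd z \<noteq> i" "fst z \<noteq> j"
          using vmp_im[OF that(1) n1] hmp_im[OF that(2) ij(4)] by auto
        obtain b where b: "b \<le> n - 1" "delta i b = snd z" using delta_surj[of "snd z" n i] z ij by auto
        obtain a where a: "a \<le> p - 1" "delta j a = fst z" using delta_surj[of "fst z" p j] z ij by auto
        have "(a, b) \<in> pcar (prodpos (p - 1) (n - 1))" using a b by auto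
        moreover have "z = vmp i (hmp j (a, b))" using a b by simp
        ultimately show ?thesis by blast
      qed
      show "pullback (prodpos (p - 1) (n - 1)) (hmp j) (x i) = pullback (prodpos (p - 1) (n - 1)) (vmp i) (y j)"
        using cxy[OF ij(4) ij(1) ij(2) ij(3)] unfolding vface_vmp hface_hmp .
    qed (simp_all add: P_def)
  qed
  have ags: "\<forall>c\<in>I. \<forall>c'\<in>I. agree P (Cc c) (GG c) (Cc c') (GG c')"
  proof (intro ballI)
    fix c c' assume c: "c \<in> I" and c': "c' \<in> I"
    obtain b i where cb: "c = (b, i)" by (cases c)
    obtain b' i' where cb': "c' = (b', i')" by (cases c')
    show "agree P (Cc c) (GG c) (Cc c') (GG c')"
    proof (cases "c = c'")
      case True then show ?thesis by (simp add: agree_refl)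
    next
      case False
      consider (TT) "b" "b'" | (TF) "b" "\<not> b'" | (FT) "\<not> b" "b'" | (FF) "\<not> b" "\<not> b'" by blast
      then show ?thesis
      proof cases
        case TT
        then have ii: "i \<le> n" "i \<noteq> k" "i' \<le> n" "i' \<noteq> k" "i \<noteq> i'" using c c' cb cb' False Iv by auto
        show ?thesis
        proof (cases "i < i'")
          case True then show ?thesis using agree_sym[OF agTT[of i i']] ii TT cb cb' by simp
        next
          case False then have "i' < i" using ii by simp
          then show ?thesis using agTT[of i' i] ii TT cb cb' by simp
        qed
      next
        case TF
        then have ii: "i \<le> n" "i \<noteq> k" "i' \<le> p" "1 \<le> p" using c c' cb cb' Iv by auto
        then show ?thesis using agTF[OF ii] TF cb cb' by simp
      next
        case FT
        then have ii: "i' \<le> n" "i' \<noteq> k" "i \<le> p" "1 \<le> p" using c c' cb cb' Iv by auto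
        then show ?thesis using agree_sym[OF agTF[OF ii]] FT cb cb' by simp
      next
        case FF
        then have ii: "i \<le> p" "i' \<le> p" "i \<noteq> i'" using c c' cb cb' False Iv by auto
        show ?thesis
        proof (cases "i < i'")
          case True then show ?thesis using agree_sym[OF agFF[of i i']] ii FF cb cb' by simp
        next
          case False then have "i' < i" using ii by simp
          then show ?thesis using agFF[of i' i] ii FF cb cb' by simp
        qed
      qed
    qed
  qed
  have imT: "vmp i ` pcar (prodpos p (n - 1)) = {z \<in> pcar P. snd z \<noteq> i}" if "i \<le> n" for i
    using vmp_im[OF _ n1, of _ i p] vmp_im_rev[of _ p n i] that unfolding P_def by blast
  have imF: "hmp j ` pcar (prodpos (p - 1) n) = {z \<in> pcar P. fst z \<noteq> j}" if "j \<le> p" "1 \<le> p" for j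
    using hmp_im[OF _ that(2), of _ j n] hmp_im_rev[of _ p n j] that unfolding P_def by blast
  have U: "(\<Union>c\<in>I. Cc c) = SL P (Collect (chn P) - MiS p n k)"
  proof (intro equalityI subsetI)
    fix As assume "As \<in> (\<Union>c\<in>I. Cc c)"
    then obtain c where c: "c \<in> I" "As \<in> Cc c" by blast
    have As: "As \<in> xi_car P" "\<forall>A\<in>set As. A \<subseteq> gm c ` pcar (dom c)" using c unfolding Cc_def by auto
    have "A \<in> Collect (chn P) - MiS p n k" if A: "A \<in> set As" for A
    proof -
      have chA: "chn P A" using As(1) A unfolding xi_car_iff by blast
      have "A \<notin> MiS p n k"
      proof (cases "fst c")
        case True
        then have ci: "snd c \<le> n" "snd c \<noteq> k" using c Iv by auto
        have "A \<subseteq> {z \<in> pcar P. snd z \<noteq> snd c}" using As(2) A True imT[OF ci(1)] unfolding gm_def dom_def by auto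
        then have "snd c \<notin> snd ` A" by auto
        then show ?thesis using ci unfolding MiS_def by auto
      next
        case False
        then have ci: "snd c \<le> p" "1 \<le> p" using c Iv by auto
        have "A \<subseteq> {z \<in> pcar P. fst z \<noteq> snd c}" using As(2) A False imF[OF ci] unfolding gm_def dom_def by auto
        then have "snd c \<notin> fst ` A" by auto
        then show ?thesis using ci unfolding MiS_def by auto
      qed
      then show ?thesis using chA by auto
    qed
    then show "As \<in> SL P (Collect (chn P) - MiS p n k)" using As unfolding SL_def by auto
  next
    fix As assume a: "As \<in> SL P (Collect (chn P) - MiS p n k)"
    have As: "As \<in> xi_car P" "set As \<subseteq> Collect (chn P) - MiS p n k" using a unfolding SL_def by auto
    define L where "L = last As"
    have L: "L \<in> set As" unfolding L_def by (rule xi_car_last_in[OF As(1)])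
    have chL: "chn P L" and nM: "L \<notin> MiS p n k" using As L by auto
    have Lsub: "L \<subseteq> pcar P" "L \<noteq> {}" using chL unfolding chn_def by auto
    have all: "A \<subseteq> L" if "A \<in> set As" for A unfolding L_def by (rule xi_car_last[OF As(1) that])
    have "\<not> {0..p} \<subseteq> fst ` L \<or> \<not> {0..n} - {k} \<subseteq> snd ` L" using nM chL unfolding MiS_def P_def by auto
    then show "As \<in> (\<Union>c\<in>I. Cc c)"
    proof
      assume "\<not> {0..p} \<subseteq> fst ` L"
      then obtain j where j0: "j \<in> {0..p}" "j \<notin> fst ` L" by blast
      then have j: "j \<le> p" "j \<notin> fst ` L" by auto
      have p1: "1 \<le> p"
      proof (rule ccontr)
        assume "\<not> 1 \<le> p"
        then have "p = 0" by simp
        obtain z where "z \<in> L" using Lsub by auto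
        then have "fst z = 0" using Lsub \<open>p = 0\<close> unfolding P_def by auto
        then show False using j \<open>z \<in> L\<close> \<open>p = 0\<close> by force
      qed
      have cI: "(False, j) \<in> I" using j p1 Iv by auto
      have "\<forall>A\<in>set As. A \<subseteq> gm (False, j) ` pcar (dom (False, j))"
        unfolding gmF domF imF[OF j(1) p1] using all Lsub j by force
      then show ?thesis using cI As(1) unfolding Cc_def by blast
    next
      assume "\<not> {0..n} - {k} \<subseteq> snd ` L"
      then obtain i where i0: "i \<in> {0..n} - {k}" "i \<notin> snd ` L" by blast
      then have i: "i \<le> n" "i \<noteq> k" "i \<notin> snd ` L" by auto
      have cI: "(True, i) \<in> I" using i Iv by auto
      have "\<forall>A\<in>set As. A \<subseteq> gm (True, i) ` pcar (dom (True, i))"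
        unfolding gmT domT imT[OF i(1)] using all Lsub i by force
      then show ?thesis using cI As(1) unfolding Cc_def by blast
    qed
  qed
  define G0 where "G0 = glue I Cc GG"
  have G0r: "relfun (sxi P (SL P (Collect (chn P) - MiS p n k))) M G0"
    using glue_relfun[OF dcs GGs ags] U unfolding G0_def by simp
  obtain F where F: "relfun (xi P) M F"
      "\<forall>As\<in>SL P (Collect (chn P) - MiS p n k). fst F As = fst G0 As \<and> (\<forall>Bs. snd F Bs As = snd G0 Bs As)"
    using ext_pp[OF H n1 kn G0r[unfolded P_def]] unfolding P_def by blast
  have Fc: "\<forall>As\<in>Cc c. fst F As = fst (GG c) As \<and> (\<forall>Bs. snd F Bs As = snd (GG c) Bs As)" if c: "c \<in> I" for c
  proof
    fix As assume As: "As \<in> Cc c"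
    then have "As \<in> SL P (Collect (chn P) - MiS p n k)" using U c by blast
    then show "fst F As = fst (GG c) As \<and> (\<forall>Bs. snd F Bs As = snd (GG c) Bs As)"
      using F(2) glue_val[OF dcs GGs ags c As] unfolding G0_def by simp
  qed
  have vx: "vface p n i F = x i" if i: "i \<le> n" "i \<noteq> k" for i
  proof -
    have cI: "(True, i) \<in> I" using i Iv by auto
    have "pullback (prodpos p (n - 1)) (vmp i) F = x i"
    proof (rule face_recover[OF iemb_vmp[OF n1] good_pp good_pp hx[OF i]])
      show "Cc (True, i) = {As \<in> xi_car (prodpos p n). \<forall>A\<in>set As. A \<subseteq> vmp i ` pcar (prodpos p (n - 1))}"
        unfolding Cc_def gmT domT P_def ..
      show "\<forall>As\<in>Cc (True, i). fst F As = fst (pb (Cc (True, i)) (inv_into (pcar (prodpos p (n - 1))) (vmp i)) (x i)) As \<and>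
         (\<forall>Bs. snd F Bs As = snd (pb (Cc (True, i)) (inv_into (pcar (prodpos p (n - 1))) (vmp i)) (x i)) Bs As)"
        using Fc[OF cI] unfolding GG_def gmT domT ddT .
    qed
    then show ?thesis unfolding vface_vmp .
  qed
  have hy': "hface p n j F = y j" if j: "1 \<le> p" "j \<le> p" for j
  proof -
    have cI: "(False, j) \<in> I" using j Iv by auto
    have "pullback (prodpos (p - 1) n) (hmp j) F = y j"
    proof (rule face_recover[OF iemb_hmp[OF j(1)] good_pp good_pp hy[OF j]])
      show "Cc (False, j) = {As \<in> xi_car (prodpos p n). \<forall>A\<in>set As. A \<subseteq> hmp j ` pcar (prodpos (p - 1) n)}"
        unfolding Cc_def gmF domF P_def ..
      show "\<forall>As\<in>Cc (False, j). fst F As = fst (pb (Cc (False, j)) (inv_into (pcar (prodpos (p - 1) n)) (hmp j)) (y j)) As \<and>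
         (\<forall>Bs. snd F Bs As = snd (pb (Cc (False, j)) (inv_into (pcar (prodpos (p - 1) n)) (hmp j)) (y j)) Bs As)"
        using Fc[OF cI] unfolding GG_def gmF domF ddF .
    qed
    then show ?thesis unfolding hface_hmp .
  qed
  show ?thesis using F(1) vx hy' unfolding P_def by blast
qed




theorem lemma5p2:
  fixes M :: "('o, 'm) relcat"
  assumes "relcat M"
    and "\<forall>n k W. 1 \<le> n \<longrightarrow> k \<le> n \<longrightarrow> relstruct n W \<longrightarrow>
           (\<exists>(i, j)\<in>W. i \<noteq> j) \<longrightarrow>
           (k = 0 \<longrightarrow> (0, 1) \<in> W) \<longrightarrow>
           (k = n \<longrightarrow> (n - 1, n) \<in> W) \<longrightarrow>
           horn_extension M n k W"
  shows "Nxi_reedy_fibrant M"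
proof -
  note H = assms(2)
  have K0: "kan_fibration (Nxi M 0) (vface 0) (\<lambda>_. (UNIV :: unit set)) (\<lambda>_ _ _. ()) (\<lambda>_ _. ())"
    unfolding kan_fibration_def
  proof (intro allI impI)
    fix n k and y :: unit and x
    assume n1: "1 \<le> n" and kn: "k \<le> n" and "y \<in> UNIV"
      and xX: "\<forall>i\<le>n. i \<noteq> k \<longrightarrow> x i \<in> Nxi M 0 (n - 1)"
      and cx: "\<forall>i j. 2 \<le> n \<longrightarrow> i < j \<longrightarrow> j \<le> n \<longrightarrow> i \<noteq> k \<longrightarrow> j \<noteq> k \<longrightarrow>
            vface 0 (n - 1) i (x j) = vface 0 (n - 1) (j - 1) (x i)"
      and "\<forall>i\<le>n. i \<noteq> k \<longrightarrow> () = ()"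
    have ex: "\<exists>z. relfun (xi (prodpos 0 n)) M z \<and> (\<forall>i\<le>n. i \<noteq> k \<longrightarrow> vface 0 n i z = x i) \<and>
        (1 \<le> (0::nat) \<longrightarrow> (\<forall>j\<le>0. hface 0 n j z = undefined))"
    proof (rule core[OF H n1 kn])
      show "\<And>i. i \<le> n \<Longrightarrow> i \<noteq> k \<Longrightarrow> relfun (xi (prodpos 0 (n - 1))) M (x i)"
        using xX unfolding Nxi_def by auto
      show "\<And>i j. 2 \<le> n \<Longrightarrow> i < j \<Longrightarrow> j \<le> n \<Longrightarrow> i \<noteq> k \<Longrightarrow> j \<noteq> k \<Longrightarrow>
          vface 0 (n - 1) i (x j) = vface 0 (n - 1) (j - 1) (x i)"
        using cx by blast
    qed auto
    then obtain z where z: "relfun (xi (prodpos 0 n)) M z" "\<forall>i\<le>n. i \<noteq> k \<longrightarrow> vface 0 n i z = x i"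
      by blast
    show "\<exists>z\<in>Nxi M 0 n. () = y \<and> (\<forall>i\<le>n. i \<noteq> k \<longrightarrow> vface 0 n i z = x i)"
      using z unfolding Nxi_def by (intro bexI[of _ z]) auto
  qed
  have Kp: "kan_fibration (Nxi M p) (vface p) (match_obj M p) (match_face p) (match_map p)"
    if p1: "1 \<le> p" for p
    unfolding kan_fibration_def
  proof (intro allI impI)
    fix n k y x
    assume n1: "1 \<le> n" and kn: "k \<le> n" and yY: "y \<in> match_obj M p n"
      and xX: "\<forall>i\<le>n. i \<noteq> k \<longrightarrow> x i \<in> Nxi M p (n - 1)"
      and cx: "\<forall>i j. 2 \<le> n \<longrightarrow> i < j \<longrightarrow> j \<le> n \<longrightarrow> i \<noteq> k \<longrightarrow> j \<noteq> k \<longrightarrow>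
            vface p (n - 1) i (x j) = vface p (n - 1) (j - 1) (x i)"
      and fx: "\<forall>i\<le>n. i \<noteq> k \<longrightarrow> match_map p (n - 1) (x i) = match_face p n i y"
    have yv: "\<forall>i\<le>p. y i \<in> Nxi M (p - 1) n" "\<forall>i>p. y i = undefined"
      "2 \<le> p \<longrightarrow> (\<forall>i j. i < j \<longrightarrow> j \<le> p \<longrightarrow> hface (p - 1) n i (y j) = hface (p - 1) n (j - 1) (y i))"
      using yY unfolding match_obj_def by auto
    have cxy: "hface p (n - 1) j (x i) = vface (p - 1) n i (y j)" if "i \<le> n" "i \<noteq> k" "j \<le> p" for i j
    proof -
      have "match_map p (n - 1) (x i) j = match_face p n i y j" using fx that by simp
      then show ?thesis using that unfolding match_map_def match_face_def by simp
    qed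
    have ex: "\<exists>z. relfun (xi (prodpos p n)) M z \<and> (\<forall>i\<le>n. i \<noteq> k \<longrightarrow> vface p n i z = x i) \<and>
        (1 \<le> p \<longrightarrow> (\<forall>j\<le>p. hface p n j z = y j))"
    proof (rule core[OF H n1 kn])
      show "\<And>i. i \<le> n \<Longrightarrow> i \<noteq> k \<Longrightarrow> relfun (xi (prodpos p (n - 1))) M (x i)"
        using xX unfolding Nxi_def by auto
      show "\<And>j. 1 \<le> p \<Longrightarrow> j \<le> p \<Longrightarrow> relfun (xi (prodpos (p - 1) n)) M (y j)"
        using yv(1) unfolding Nxi_def by auto
      show "\<And>i j. 2 \<le> n \<Longrightarrow> i < j \<Longrightarrow> j \<le> n \<Longrightarrow> i \<noteq> k \<Longrightarrow> j \<noteq> k \<Longrightarrow>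
          vface p (n - 1) i (x j) = vface p (n - 1) (j - 1) (x i)"
        using cx by blast
      show "\<And>i j. 2 \<le> p \<Longrightarrow> i < j \<Longrightarrow> j \<le> p \<Longrightarrow> hface (p - 1) n i (y j) = hface (p - 1) n (j - 1) (y i)"
        using yv(3) by blast
      show "\<And>i j. 1 \<le> p \<Longrightarrow> i \<le> n \<Longrightarrow> i \<noteq> k \<Longrightarrow> j \<le> p \<Longrightarrow> hface p (n - 1) j (x i) = vface (p - 1) n i (y j)"
        using cxy by blast
    qed
    then obtain z where z: "relfun (xi (prodpos p n)) M z" "\<forall>i\<le>n. i \<noteq> k \<longrightarrow> vface p n i z = x i"
      "\<forall>j\<le>p. hface p n j z = y j"
      using p1 by blast
    have "match_map p n z = y"
    proof (rule ext)
      fix j show "match_map p n z j = y j"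
        using z(3) yv(2) unfolding match_map_def by (cases "j \<le> p") auto
    qed
    then show "\<exists>z\<in>Nxi M p n. match_map p n z = y \<and> (\<forall>i\<le>n. i \<noteq> k \<longrightarrow> vface p n i z = x i)"
      using z unfolding Nxi_def by (intro bexI[of _ z]) auto
  qed
  show ?thesis unfolding Nxi_reedy_fibrant_def using K0 Kp by blast
qed


end
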